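(* Let $w \in S_n$. Suppose that $\mathfrak{S}_w$ is a single standard elementary monomial $e_{(a_1,\dots,a_n)} = \prod_i e^i_{a_i}$. Then for each $1 \le i \le n-1$, $a_i = 0$ if and only if $i$ is an ascent of $w$. Furthermore, if $i$ is a descent of $w$ and $i-1$ is an ascent of $w$, then $\partial_i(\mathfrak{S}_w) = \mathfrak{S}_{ws_i}$ is also a single standard elementary monomial. Similarly, suppose that $\mathfrak{S}_w$ is a single complete homogeneous monomial $h_{(a_1,\dots,a_n)} = \prod_i h^i_{a_i}$. Then $a_i = 0$ if and only if $i$ is an ascent of $w$; and if $i$ is a descent of $w$ and $i+1$ is an ascent of $w$, then $\partial_i(\mathfrak{S}_w) = \mathfrak{S}_{ws_i}$ is also a single complete homogeneous monomial.
   Context: $e^i_j$ (resp. $h^i_j$) is the elementary (resp. complete homogeneous) symmetric polynomial of degree $j$ in $x_1,\dots,x_i$. The divided difference operator is $\partial_i f = (f - s_i f)/(x_i - x_{i+1})$ where $s_i$ swaps $x_i$ and $x_{i+1}$. Schubert polynomials: $\mathfrak{S}_{w_0} = x_1^{n-1}\cdots x_{n-1}$ for the longest $w_0\in S_n$, and $\partial_i\mathfrak{S}_w = \mathfrak{S}_{ws_i}$ if $\ell(ws_i) = \ell(w)-1$, $0$ otherwise. A position $i$ is a descent of $w$ if $w(i+1) < w(i)$ and an ascent if $w(i+1) > w(i)$. *)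

theory Defs
  imports "HOL-Library.Poly_Mapping" "HOL-Combinatorics.Transposition" "HOL-Combinatorics.Permutations"
begin

text \<open>Polynomials in variables x_1, x_2, ... (indexed by nat) with integer coefficients,
  represented as finitely supported maps from monomials (exponent vectors) to coefficients.\<close>
type_synonym mpoly = "(nat \<Rightarrow>\<^sub>0 nat) \<Rightarrow>\<^sub>0 int"

definition mon :: "(nat \<Rightarrow>\<^sub>0 nat) \<Rightarrow> mpoly" where
  "mon m = Poly_Mapping.single m 1"

definition var :: "nat \<Rightarrow> mpoly" where
  "var i = mon (Poly_Mapping.single i 1)"

definition swap_mon :: "nat \<Rightarrow> (nat \<Rightarrow>\<^sub>0 nat) \<Rightarrow> (nat \<Rightarrow>\<^sub>0 nat)" where
  "swap_mon i m = Abs_poly_mapping (\<lambda>k. Poly_Mapping.lookup m (transpose i (i+1) k))"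

definition swap_vars :: "nat \<Rightarrow> mpoly \<Rightarrow> mpoly" where
  "swap_vars i f = Abs_poly_mapping (\<lambda>m. Poly_Mapping.lookup f (swap_mon i m))"

definition divdiff :: "nat \<Rightarrow> mpoly \<Rightarrow> mpoly" where
  "divdiff i f = (THE g. (var i - var (i+1)) * g = f - swap_vars i f)"

definition elem :: "nat \<Rightarrow> nat \<Rightarrow> mpoly" where
  "elem i j = (\<Sum>S\<in>{S. S \<subseteq> {1..i} \<and> card S = j}. \<Prod>k\<in>S. var k)"

definition chom :: "nat \<Rightarrow> nat \<Rightarrow> mpoly" where
  "chom i j = (\<Sum>m\<in>{m. Poly_Mapping.keys m \<subseteq> {1..i} \<and> (\<Sum>k\<in>{1..i}. Poly_Mapping.lookup m k) = j}. mon m)"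

definition elem_monomial :: "nat \<Rightarrow> (nat \<Rightarrow> nat) \<Rightarrow> mpoly" where
  "elem_monomial n a = (\<Prod>i\<in>{1..n}. elem i (a i))"

definition chom_monomial :: "nat \<Rightarrow> (nat \<Rightarrow> nat) \<Rightarrow> mpoly" where
  "chom_monomial n a = (\<Prod>i\<in>{1..n}. chom i (a i))"

text \<open>Permutations of S_n as maps nat => nat permuting {1..n} (identity elsewhere).\<close>
definition inv_length :: "nat \<Rightarrow> (nat \<Rightarrow> nat) \<Rightarrow> nat" where
  "inv_length n w = card {(i,j). 1 \<le> i \<and> i < j \<and> j \<le> n \<and> w j < w i}"

definition longest :: "nat \<Rightarrow> nat \<Rightarrow> nat" where
  "longest n k = (if 1 \<le> k \<and> k \<le> n then n + 1 - k else k)"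

definition staircase :: "nat \<Rightarrow> mpoly" where
  "staircase n = (\<Prod>k\<in>{1..n}. var k ^ (n - k))"

definition is_schubert_family :: "nat \<Rightarrow> ((nat \<Rightarrow> nat) \<Rightarrow> mpoly) \<Rightarrow> bool" where
  "is_schubert_family n S \<longleftrightarrow>
     S (longest n) = staircase n \<and>
     (\<forall>w i. w permutes {1..n} \<and> 1 \<le> i \<and> i < n \<longrightarrow>
        divdiff i (S w) =
          (if inv_length n (w \<circ> transpose i (i+1)) + 1 = inv_length n w
           then S (w \<circ> transpose i (i+1)) else 0))"

definition schubert :: "nat \<Rightarrow> (nat \<Rightarrow> nat) \<Rightarrow> mpoly" where
  "schubert n w = (THE S. is_schubert_family n S
                          \<and> (\<forall>v. \<not> v permutes {1..n} \<longrightarrow> S v = 0)) w"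

text \<open>Ascent/descent. Since w fixes 0 and n+1, position 0 and position n count as ascents.\<close>
definition ascent :: "(nat \<Rightarrow> nat) \<Rightarrow> nat \<Rightarrow> bool" where
  "ascent w i \<longleftrightarrow> w i < w (i+1)"

definition descent :: "(nat \<Rightarrow> nat) \<Rightarrow> nat \<Rightarrow> bool" where
  "descent w i \<longleftrightarrow> w (i+1) < w i"

end

theory Submission
  imports Defs
begin

abbreviation (input) lkp where "lkp \<equiv> Poly_Mapping.lookup"

definition invol :: "(nat \<Rightarrow> nat) \<Rightarrow> bool" where
  "invol \<sigma> \<longleftrightarrow> (\<forall>k. \<sigma> (\<sigma> k) = k)"

lemma invol_inj: "invol \<sigma> \<Longrightarrow> inj \<sigma>"
  unfolding invol_def by (metis injI)

lemma invol_transpose: "invol (transpose a b)"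
  unfolding invol_def by simp

definition pm :: "(nat \<Rightarrow> nat) \<Rightarrow> (nat \<Rightarrow>\<^sub>0 nat) \<Rightarrow> (nat \<Rightarrow>\<^sub>0 nat)" where
  "pm \<sigma> m = Abs_poly_mapping (\<lambda>k. lkp m (\<sigma> k))"

definition pv :: "(nat \<Rightarrow> nat) \<Rightarrow> mpoly \<Rightarrow> mpoly" where
  "pv \<sigma> f = Abs_poly_mapping (\<lambda>m. lkp f (pm \<sigma> m))"

lemma swap_mon_pm: "swap_mon i = pm (transpose i (i+1))"
  unfolding swap_mon_def pm_def by (rule ext) simp

lemma swap_vars_pv: "swap_vars i = pv (transpose i (i+1))"
  unfolding swap_vars_def pv_def swap_mon_pm by (rule ext) simp

lemma lookup_pm:
  assumes "inj \<sigma>" shows "lkp (pm \<sigma> m) k = lkp m (\<sigma> k)"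
proof -
  have "{k. lkp m (\<sigma> k) \<noteq> 0} = \<sigma> -` Poly_Mapping.keys m" by (auto simp: in_keys_iff)
  hence "finite {k. lkp m (\<sigma> k) \<noteq> 0}" using assms by (simp add: finite_vimageI)
  thus ?thesis unfolding pm_def by simp
qed

lemma pm_invol: "invol \<sigma> \<Longrightarrow> pm \<sigma> (pm \<sigma> m) = m"
  by (rule poly_mapping_eqI) (simp add: lookup_pm invol_inj, simp add: invol_def)

lemma pm_inj: "invol \<sigma> \<Longrightarrow> inj (pm \<sigma>)"
  by (metis injI pm_invol)

lemma pm_add: "inj \<sigma> \<Longrightarrow> pm \<sigma> (a + b) = pm \<sigma> a + pm \<sigma> b"
  by (rule poly_mapping_eqI) (simp add: lookup_pm lookup_add)

lemma pm_zero: "inj \<sigma> \<Longrightarrow> pm \<sigma> 0 = 0"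
  by (rule poly_mapping_eqI) (simp add: lookup_pm)

lemma pm_single: "invol \<sigma> \<Longrightarrow> pm \<sigma> (Poly_Mapping.single a v) = Poly_Mapping.single (\<sigma> a) v"
  apply (rule poly_mapping_eqI)
  apply (simp add: lookup_pm invol_inj lookup_single when_def)
  apply (metis invol_def)
  done

lemma lookup_pv:
  assumes "invol \<sigma>" shows "lkp (pv \<sigma> f) m = lkp f (pm \<sigma> m)"
proof -
  have "{m. lkp f (pm \<sigma> m) \<noteq> 0} = pm \<sigma> -` Poly_Mapping.keys f" by (auto simp: in_keys_iff)
  hence "finite {m. lkp f (pm \<sigma> m) \<noteq> 0}" using assms pm_inj by (simp add: finite_vimageI)
  thus ?thesis unfolding pv_def by simp
qed

lemma pv_invol: "invol \<sigma> \<Longrightarrow> pv \<sigma> (pv \<sigma> f) = f"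
  by (rule poly_mapping_eqI) (simp add: lookup_pv pm_invol)

lemma pv_add: "invol \<sigma> \<Longrightarrow> pv \<sigma> (f + g) = pv \<sigma> f + pv \<sigma> g"
  by (rule poly_mapping_eqI) (simp add: lookup_pv lookup_add)

lemma pv_diff: "invol \<sigma> \<Longrightarrow> pv \<sigma> (f - g) = pv \<sigma> f - pv \<sigma> g"
  by (rule poly_mapping_eqI) (simp add: lookup_pv lookup_minus)

lemma pv_uminus: "invol \<sigma> \<Longrightarrow> pv \<sigma> (- f) = - pv \<sigma> f"
  by (rule poly_mapping_eqI) (simp add: lookup_pv)

lemma pv_zero: "invol \<sigma> \<Longrightarrow> pv \<sigma> 0 = 0"
  by (rule poly_mapping_eqI) (simp add: lookup_pv)

lemma pv_single: "invol \<sigma> \<Longrightarrow> pv \<sigma> (Poly_Mapping.single m c) = Poly_Mapping.single (pm \<sigma> m) c"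
  apply (rule poly_mapping_eqI)
  apply (simp add: lookup_pv lookup_single when_def)
  apply (metis pm_invol)
  done

lemma pv_mon: "invol \<sigma> \<Longrightarrow> pv \<sigma> (mon m) = mon (pm \<sigma> m)"
  unfolding mon_def by (rule pv_single)

lemma mon_add: "mon (a + b) = mon a * mon b"
  unfolding mon_def by (simp add: mult_single)

lemma mon_zero: "mon 0 = 1"
  unfolding mon_def by simp

lemma pv_mult: assumes "invol \<sigma>" shows "pv \<sigma> (f * g) = pv \<sigma> f * pv \<sigma> g"
proof -
  have "Poly_Mapping.keys f \<subseteq> UNIV" by simp
  then show ?thesis
  proof (induction f rule: frag_induction)
    case zero then show ?case by (simp add: pv_zero assms)
  next
    case (diff a b) then show ?case by (simp add: left_diff_distrib pv_diff assms)
  next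
    case (one x)
    have "Poly_Mapping.keys g \<subseteq> UNIV" by simp
    then show ?case
    proof (induction g rule: frag_induction)
      case zero then show ?case by (simp add: pv_zero assms)
    next
      case (diff a b) then show ?case by (simp add: right_diff_distrib pv_diff assms)
    next
      case (one y)
      show ?case using assms
        by (simp add: pv_single mult_single pm_add invol_inj)
    qed
  qed
qed

lemma pv_one: "invol \<sigma> \<Longrightarrow> pv \<sigma> 1 = 1"
  using pv_mon[of \<sigma> 0] by (simp add: mon_zero pm_zero invol_inj)

lemma pv_power: "invol \<sigma> \<Longrightarrow> pv \<sigma> (f ^ k) = pv \<sigma> f ^ k"
  by (induction k) (simp_all add: pv_one pv_mult)

lemma pv_sum: "invol \<sigma> \<Longrightarrow> pv \<sigma> (sum f A) = (\<Sum>a\<in>A. pv \<sigma> (f a))"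
  by (induction A rule: infinite_finite_induct) (simp_all add: pv_zero pv_add)

lemma pv_prod: "invol \<sigma> \<Longrightarrow> pv \<sigma> (prod f A) = (\<Prod>a\<in>A. pv \<sigma> (f a))"
  by (induction A rule: infinite_finite_induct) (simp_all add: pv_one pv_mult)

lemma pv_var: "invol \<sigma> \<Longrightarrow> pv \<sigma> (var k) = var (\<sigma> k)"
  unfolding var_def by (simp add: pv_mon pm_single)

lemma var_power: "var k ^ a = mon (Poly_Mapping.single k a)"
  by (induction a) (simp_all add: mon_zero var_def mon_add[symmetric] single_add[symmetric])

lemma var_nonzero: "var k \<noteq> 0"
  unfolding var_def mon_def by simp

lemma var_inj: "var a = var b \<Longrightarrow> a = b"
  unfolding var_def mon_def by (metis inj_single injD lookup_single_eq lookup_single_not_eq one_neq_zero)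

lemma var_diff_nonzero: "a \<noteq> b \<Longrightarrow> var a - var b \<noteq> 0"
  using var_inj by auto

definition sw :: "nat \<Rightarrow> nat \<Rightarrow> nat" where "sw i = transpose i (i+1)"
lemma sw_i[simp]: "sw i i = Suc i" by (simp add: sw_def)
lemma sw_Si[simp]: "sw i (Suc i) = i" by (simp add: sw_def)
lemma sw_other: "k \<noteq> i \<Longrightarrow> k \<noteq> Suc i \<Longrightarrow> sw i k = k" by (simp add: sw_def)
lemma sw_sw[simp]: "sw i (sw i k) = k" by (simp add: sw_def)
abbreviation sv :: "nat \<Rightarrow> mpoly \<Rightarrow> mpoly" where "sv i \<equiv> pv (sw i)"
definition dlt :: "nat \<Rightarrow> mpoly" where "dlt i = var i - var (i+1)"

lemma inv_sw[simp]: "invol (sw i)" unfolding sw_def by (rule invol_transpose)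
declare invol_transpose[simp] pv_var[simp] pv_diff[simp] pv_add[simp] pv_mult[simp] pv_one[simp] pv_zero[simp] pv_uminus[simp] pv_invol[simp]

lemma sv_var: "sv i (var k) = var (sw i k)" by (simp add: pv_var)

lemma sv_var_i: "sv i (var i) = var (i+1)" by (simp add: pv_var)
lemma sv_var_Si: "sv i (var (i+1)) = var i" by (simp add: pv_var)
lemma sv_var_other: "k \<noteq> i \<Longrightarrow> k \<noteq> i+1 \<Longrightarrow> sv i (var k) = var k" by (simp add: pv_var sw_other)

lemma sv_dlt[simp]: "sv i (dlt i) = - dlt i" by (simp add: dlt_def)

lemma dlt_nonzero: "dlt i \<noteq> 0" unfolding dlt_def by (rule var_diff_nonzero) simp

definition DD :: "nat \<Rightarrow> mpoly \<Rightarrow> bool" where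
  "DD i f \<longleftrightarrow> (\<exists>g. dlt i * g = f - sv i f)"

lemma DD_diff: "DD i f \<Longrightarrow> DD i g \<Longrightarrow> DD i (f - g)"
proof -
  assume "DD i f" "DD i g"
  then obtain g1 g2 where 1: "dlt i * g1 = f - sv i f" and 2: "dlt i * g2 = g - sv i g" unfolding DD_def by blast
  have "f - g - sv i (f - g) = (f - sv i f) - (g - sv i g)" by (simp add: algebra_simps)
  also have "\<dots> = dlt i * (g1 - g2)" by (simp only: 1[symmetric] 2[symmetric] right_diff_distrib)
  finally have "f - g - sv i (f - g) = dlt i * (g1 - g2)" .
  then show ?thesis unfolding DD_def by metis
qed

lemma DD_mult: "DD i f \<Longrightarrow> DD i g \<Longrightarrow> DD i (f * g)"
proof -
  assume "DD i f" "DD i g"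
  then obtain g1 g2 where 1: "dlt i * g1 = f - sv i f" and 2: "dlt i * g2 = g - sv i g" unfolding DD_def by blast
  have "f * g - sv i (f * g) = (f - sv i f) * g + sv i f * (g - sv i g)"
    by (simp add: algebra_simps)
  also have "\<dots> = (dlt i * g1) * g + sv i f * (dlt i * g2)" by (simp only: 1[symmetric] 2[symmetric])
  also have "\<dots> = dlt i * (g1 * g + sv i f * g2)" by (simp add: algebra_simps)
  finally show ?thesis unfolding DD_def by metis
qed

lemma DD_one: "DD i 1"
  unfolding DD_def by (rule exI[of _ 0]) (simp add: pv_one)

lemma DD_var: "DD i (var k)"
proof -
  consider "k = i" | "k = i+1" | "k \<noteq> i \<and> k \<noteq> i+1" by blast
  then show ?thesis
  proof cases
    case 1 then show ?thesis unfolding DD_def dlt_def by (intro exI[of _ 1]) simp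
  next
    case 2 then show ?thesis unfolding DD_def dlt_def by (intro exI[of _ "-1"]) simp
  next
    case 3 then show ?thesis unfolding DD_def by (intro exI[of _ 0]) (simp add: sw_other)
  qed
qed

lemma DD_power: "DD i f \<Longrightarrow> DD i (f ^ k)"
  by (induction k) (simp_all add: DD_one DD_mult)

lemma update_eq_add: "a \<notin> Poly_Mapping.keys x \<Longrightarrow> Poly_Mapping.update a b x = x + Poly_Mapping.single a b"
  by (rule poly_mapping_eqI) (auto simp: lookup_update lookup_add lookup_single when_def in_keys_iff)

lemma DD_mon: "DD i (mon x)"
proof (induction x rule: update_induct)
  case const then show ?case by (simp add: mon_zero DD_one)
next
  case (update f a b)
  then show ?case
    by (simp add: update_eq_add mon_add var_power[symmetric] DD_mult DD_power DD_var)
qed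

lemma DD_all: "DD i f"
proof -
  have "Poly_Mapping.keys f \<subseteq> UNIV" by simp
  then show ?thesis
  proof (induction f rule: frag_induction)
    case zero then show ?case unfolding DD_def by (intro exI[of _ 0]) (simp add: pv_zero)
  next
    case (one x) then show ?case using DD_mon[of i x] by (simp add: mon_def)
  next
    case (diff a b) then show ?case by (rule DD_diff)
  qed
qed

lemma divdiff_eq: "dlt i * divdiff i f = f - sv i f"
proof -
  obtain g where g: "dlt i * g = f - sv i f" using DD_all[of i f] unfolding DD_def by blast
  have ex: "\<exists>!g. dlt i * g = f - sv i f"
  proof (rule ex1I[of _ g], rule g)
    fix y assume "dlt i * y = f - sv i f"
    with g have "dlt i * y = dlt i * g" by simp
    thus "y = g" using dlt_nonzero[of i] by simp
  qed
  show ?thesis unfolding divdiff_def swap_vars_pv sw_def[symmetric] dlt_def[symmetric] by (rule theI'[OF ex])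
qed

lemma divdiff_unique: "dlt i * g = f - sv i f \<Longrightarrow> divdiff i f = g"
  using divdiff_eq[of i f] dlt_nonzero[of i] by (metis mult_left_cancel)

lemma dd_diff: "divdiff i (f - g) = divdiff i f - divdiff i g"
  by (rule divdiff_unique) (simp add: right_diff_distrib divdiff_eq algebra_simps)

lemma dd_add: "divdiff i (f + g) = divdiff i f + divdiff i g"
  by (rule divdiff_unique) (simp add: distrib_left divdiff_eq algebra_simps)

lemma dd_zero[simp]: "divdiff i 0 = 0"
  by (rule divdiff_unique) (simp add: pv_zero)

lemma dd_uminus: "divdiff i (- f) = - divdiff i f"
  by (rule divdiff_unique) (simp add: divdiff_eq pv_uminus)

lemma dd_sum: "divdiff i (sum f A) = (\<Sum>a\<in>A. divdiff i (f a))"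
  by (induction A rule: infinite_finite_induct) (simp_all add: dd_add)

lemma dd_mult: "divdiff i (f * g) = divdiff i f * g + sv i f * divdiff i g"
proof (rule divdiff_unique)
  show "dlt i * (divdiff i f * g + sv i f * divdiff i g) = f * g - sv i (f * g)"
  proof -
    have "dlt i * (divdiff i f * g + sv i f * divdiff i g) = (dlt i * divdiff i f) * g + sv i f * (dlt i * divdiff i g)"
      by (simp add: algebra_simps)
    also have "\<dots> = f * g - sv i (f * g)" by (simp only: divdiff_eq pv_mult inv_sw) (simp add: algebra_simps)
    finally show ?thesis .
  qed
qed

lemma dd_sym: "sv i f = f \<Longrightarrow> divdiff i f = 0"
  by (rule divdiff_unique) simp

lemma dd_zero_sym: "divdiff i f = 0 \<Longrightarrow> sv i f = f"
  using divdiff_eq[of i f] by simp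

lemma dd_sym_mult: "sv i f = f \<Longrightarrow> divdiff i (f * g) = f * divdiff i g"
  by (simp add: dd_mult dd_sym)

lemma sv_dd: "sv i (divdiff i f) = divdiff i f"
proof -
  have "sv i (dlt i * divdiff i f) = sv i (f - sv i f)" by (simp add: divdiff_eq)
  hence "- dlt i * sv i (divdiff i f) = sv i f - f" by simp
  hence h: "- (dlt i * sv i (divdiff i f)) = sv i f - f" by simp
  have "dlt i * sv i (divdiff i f) = - (- (dlt i * sv i (divdiff i f)))" by simp
  also have "\<dots> = f - sv i f" unfolding h by simp
  finally have "dlt i * sv i (divdiff i f) = f - sv i f" .
  hence "dlt i * sv i (divdiff i f) = dlt i * divdiff i f" by (simp add: divdiff_eq)
  thus ?thesis using dlt_nonzero by simp
qed

lemma dd_dd: "divdiff i (divdiff i f) = 0"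
  by (rule dd_sym) (rule sv_dd)

lemma dd_var_i: "divdiff i (var i) = 1"
  by (rule divdiff_unique) (simp add: dlt_def)

lemma dd_one[simp]: "divdiff i 1 = 0"
  by (rule dd_sym) (simp add: pv_one)

lemma dd_sv: "divdiff i (sv i f) = - divdiff i f"
  by (rule divdiff_unique) (simp add: divdiff_eq)

lemma braid_alg:
  fixes x y z f sf tf tsf stf stsf g1 g2 g3 sg2 tg1 stg1 :: "'a::comm_ring"
  assumes e1: "(x-y)*g1 = f - sf"
  and e2: "(y-z)*g2 = g1 - tg1"
  and e3: "(x-y)*g3 = g2 - sg2"
  and e4: "(x-z)*sg2 = g1 - stg1"
  and e5: "(x-z)*tg1 = tf - tsf"
  and e6: "(y-z)*stg1 = stf - stsf"
  shows "((x-y)*(x-z)*(y-z)) * (((x-y)*(x-z)*(y-z)) * g3) = ((x-y)*(x-z)*(y-z)) * (f - sf - tf + tsf + stf - stsf)"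
proof -
  have a: "((x-y)*(x-z)*(y-z)) * g3 = (x-z)*((y-z)*g2) - (y-z)*((x-z)*sg2)"
    by (metis (no_types) e3 mult.assoc mult.commute right_diff_distrib)
  also have "\<dots> = (x-z)*(g1 - tg1) - (y-z)*(g1 - stg1)" by (simp only: e2 e4)
  finally have a: "((x-y)*(x-z)*(y-z)) * g3 = (x-z)*(g1 - tg1) - (y-z)*(g1 - stg1)" .
  have "((x-y)*(x-z)*(y-z)) * ((x-z)*(g1 - tg1) - (y-z)*(g1 - stg1))
     = (x-z)*(y-z)*((x-z) - (y-z)) * ((x-y)*g1) - (x-y)*(x-z)*(y-z)*((x-z)*tg1) + (x-y)*(x-z)*(y-z)*((y-z)*stg1)"
    by (simp add: algebra_simps)
  also have "\<dots> = (x-z)*(y-z)*((x-z) - (y-z)) * (f - sf) - (x-y)*(x-z)*(y-z)*(tf - tsf) + (x-y)*(x-z)*(y-z)*(stf - stsf)"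
    by (simp only: e1 e5 e6)
  also have "\<dots> = ((x-y)*(x-z)*(y-z)) * (f - sf - tf + tsf + stf - stsf)"
    by (simp add: algebra_simps)
  finally show ?thesis using a by simp
qed

lemma braid_alg2:
  fixes x y z f sf tf stf tsf tstf h1 h2 h3 th2 sh1 tsh1 :: "'a::comm_ring"
  assumes e1: "(y-z)*h1 = f - tf"
  and e2: "(x-y)*h2 = h1 - sh1"
  and e3: "(y-z)*h3 = h2 - th2"
  and e4: "(x-z)*th2 = h1 - tsh1"
  and e5: "(x-z)*sh1 = sf - stf"
  and e6: "(x-y)*tsh1 = tsf - tstf"
  shows "((x-y)*(x-z)*(y-z)) * (((x-y)*(x-z)*(y-z)) * h3) = ((x-y)*(x-z)*(y-z)) * (f - tf - sf + stf + tsf - tstf)"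
proof -
  have "((x-y)*(x-z)*(y-z)) * h3 = (x-z)*((x-y)*h2) - (x-y)*((x-z)*th2)"
    by (metis (no_types) e3 mult.assoc mult.commute right_diff_distrib)
  also have "\<dots> = (x-z)*(h1 - sh1) - (x-y)*(h1 - tsh1)" by (simp only: e2 e4)
  finally have a: "((x-y)*(x-z)*(y-z)) * h3 = (x-z)*(h1 - sh1) - (x-y)*(h1 - tsh1)" .
  have "((x-y)*(x-z)*(y-z)) * ((x-z)*(h1 - sh1) - (x-y)*(h1 - tsh1))
     = (x-y)*(x-z)*((x-z) - (x-y)) * ((y-z)*h1) - (x-y)*(x-z)*(y-z)*((x-z)*sh1) + (x-y)*(x-z)*(y-z)*((x-y)*tsh1)"
    by (simp add: algebra_simps)
  also have "\<dots> = (x-y)*(x-z)*((x-z) - (x-y)) * (f - tf) - (x-y)*(x-z)*(y-z)*(sf - stf) + (x-y)*(x-z)*(y-z)*(tsf - tstf)"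
    by (simp only: e1 e5 e6)
  also have "\<dots> = ((x-y)*(x-z)*(y-z)) * (f - tf - sf + stf + tsf - tstf)"
    by (simp add: algebra_simps)
  finally show ?thesis using a by simp
qed

lemma lookup_pm3: "invol \<sigma> \<Longrightarrow> invol \<tau> \<Longrightarrow> invol \<rho> \<Longrightarrow>
  lkp (pm \<sigma> (pm \<tau> (pm \<rho> m))) k = lkp m (\<rho> (\<tau> (\<sigma> k)))"
  by (simp add: lookup_pm invol_inj)

lemma sw_braid: "sw i (sw (Suc i) (sw i k)) = sw (Suc i) (sw i (sw (Suc i) k))"
  by (simp add: sw_def transpose_def)

lemma sw_comm: "Suc i < j \<Longrightarrow> sw i (sw j k) = sw j (sw i k)"
  by (simp add: sw_def transpose_def)

lemma sv_braid: "sv i (sv (Suc i) (sv i f)) = sv (Suc i) (sv i (sv (Suc i) f))"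
proof (rule poly_mapping_eqI)
  fix m
  have "pm (sw i) (pm (sw (Suc i)) (pm (sw i) m)) = pm (sw (Suc i)) (pm (sw i) (pm (sw (Suc i)) m))"
    by (rule poly_mapping_eqI) (simp add: lookup_pm3 sw_braid)
  then show "lkp (sv i (sv (Suc i) (sv i f))) m = lkp (sv (Suc i) (sv i (sv (Suc i) f))) m"
    by (simp add: lookup_pv)
qed

lemma sv_comm: "Suc i < j \<Longrightarrow> sv i (sv j f) = sv j (sv i f)"
proof (rule poly_mapping_eqI)
  fix m assume "Suc i < j"
  have "pm (sw i) (pm (sw j) m) = pm (sw j) (pm (sw i) m)"
    by (rule poly_mapping_eqI) (simp add: lookup_pm invol_inj sw_comm[OF \<open>Suc i < j\<close>])
  then show "lkp (sv i (sv j f)) m = lkp (sv j (sv i f)) m"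
    by (simp add: lookup_pv)
qed

lemma dd_comm:
  assumes ij: "Suc i < j"
  shows "divdiff i (divdiff j f) = divdiff j (divdiff i f)"
proof -
  have sij: "sv i (dlt j) = dlt j" using ij by (simp add: dlt_def sw_other)
  have sji: "sv j (dlt i) = dlt i" using ij by (simp add: dlt_def sw_other)
  have ab0: "dlt i * dlt j \<noteq> 0" by (simp add: dlt_nonzero)
  have 1: "dlt i * dlt j * divdiff i (divdiff j f) = (f - sv j f) - (sv i f - sv i (sv j f))"
  proof -
    have "sv i (dlt j * divdiff j f) = sv i (f - sv j f)" by (simp only: divdiff_eq)
    hence b: "dlt j * sv i (divdiff j f) = sv i f - sv i (sv j f)" by (simp add: sij)
    have "dlt i * dlt j * divdiff i (divdiff j f) = dlt j * (dlt i * divdiff i (divdiff j f))"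
      by (simp add: algebra_simps)
    also have "\<dots> = dlt j * divdiff j f - dlt j * sv i (divdiff j f)" by (simp add: divdiff_eq algebra_simps)
    also have "\<dots> = (f - sv j f) - (sv i f - sv i (sv j f))" by (simp only: b divdiff_eq)
    finally show ?thesis .
  qed
  have 2: "dlt i * dlt j * divdiff j (divdiff i f) = (f - sv i f) - (sv j f - sv j (sv i f))"
  proof -
    have "sv j (dlt i * divdiff i f) = sv j (f - sv i f)" by (simp only: divdiff_eq)
    hence b: "dlt i * sv j (divdiff i f) = sv j f - sv j (sv i f)" by (simp add: sji)
    have "dlt i * dlt j * divdiff j (divdiff i f) = dlt i * (dlt j * divdiff j (divdiff i f))"
      by (simp add: algebra_simps)
    also have "\<dots> = dlt i * divdiff i f - dlt i * sv j (divdiff i f)" by (simp add: divdiff_eq algebra_simps)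
    also have "\<dots> = (f - sv i f) - (sv j f - sv j (sv i f))" by (simp only: b divdiff_eq)
    finally show ?thesis .
  qed
  have "dlt i * dlt j * divdiff i (divdiff j f) = dlt i * dlt j * divdiff j (divdiff i f)"
    unfolding 1 2 using sv_comm[OF ij, of f] by (simp add: algebra_simps)
  thus ?thesis using ab0 by simp
qed

lemma dd_braid: "divdiff i (divdiff (Suc i) (divdiff i f)) = divdiff (Suc i) (divdiff i (divdiff (Suc i) f))"
proof -
  define x y z where "x = var i" and "y = var (Suc i)" and "z = var (Suc (Suc i))"
  have di: "dlt i = x - y" and dSi: "dlt (Suc i) = y - z" unfolding dlt_def x_def y_def z_def by simp_all
  have sx: "sv i x = y" and sy: "sv i y = x" and sz: "sv i z = z"
    unfolding x_def y_def z_def by (simp_all add: sw_other)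
  have tx: "sv (Suc i) x = x" and ty: "sv (Suc i) y = z" and tz: "sv (Suc i) z = y"
    unfolding x_def y_def z_def by (simp_all add: sw_other)
  have D0: "(x-y)*(x-z)*(y-z) \<noteq> 0" unfolding x_def y_def z_def by (auto dest: var_inj)
  define s t where "s = sv i" and "t = sv (Suc i)"
  have L: "((x-y)*(x-z)*(y-z)) * (((x-y)*(x-z)*(y-z)) * divdiff i (divdiff (Suc i) (divdiff i f)))
     = ((x-y)*(x-z)*(y-z)) * (f - s f - t f + t (s f) + s (t f) - s (t (s f)))"
  proof (rule braid_alg)
    show "(x-y)*divdiff i f = f - s f" unfolding s_def using divdiff_eq[of i f] di by simp
    show "(y-z)*divdiff (Suc i) (divdiff i f) = divdiff i f - t (divdiff i f)"
      unfolding t_def using divdiff_eq[of "Suc i" "divdiff i f"] dSi by simp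
    show "(x-y)*divdiff i (divdiff (Suc i) (divdiff i f)) = divdiff (Suc i) (divdiff i f) - s (divdiff (Suc i) (divdiff i f))"
      unfolding s_def using divdiff_eq[of i] di by simp
    have "sv i ((y-z)*divdiff (Suc i) (divdiff i f)) = sv i (divdiff i f - t (divdiff i f))"
      unfolding t_def using divdiff_eq[of "Suc i" "divdiff i f"] dSi by simp
    then show "(x-z)*s (divdiff (Suc i) (divdiff i f)) = divdiff i f - s (t (divdiff i f))"
      unfolding s_def by (simp add: sx sy sz sv_dd)
    have "sv (Suc i) ((x-y)*divdiff i f) = sv (Suc i) (f - s f)"
      unfolding s_def using divdiff_eq[of i f] di by simp
    then show e5: "(x-z)*t (divdiff i f) = t f - t (s f)"
      unfolding t_def by (simp add: tx ty tz)
    have "sv i ((x-z)*t (divdiff i f)) = sv i (t f - t (s f))" using e5 by simp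
    then show "(y-z)*s (t (divdiff i f)) = s (t f) - s (t (s f))"
      unfolding s_def by (simp add: sx sy sz)
  qed
  have R: "((x-y)*(x-z)*(y-z)) * (((x-y)*(x-z)*(y-z)) * divdiff (Suc i) (divdiff i (divdiff (Suc i) f)))
     = ((x-y)*(x-z)*(y-z)) * (f - t f - s f + s (t f) + t (s f) - t (s (t f)))"
  proof (rule braid_alg2)
    show "(y-z)*divdiff (Suc i) f = f - t f" unfolding t_def using divdiff_eq[of "Suc i" f] dSi by simp
    show "(x-y)*divdiff i (divdiff (Suc i) f) = divdiff (Suc i) f - s (divdiff (Suc i) f)"
      unfolding s_def using divdiff_eq[of i "divdiff (Suc i) f"] di by simp
    show "(y-z)*divdiff (Suc i) (divdiff i (divdiff (Suc i) f)) = divdiff i (divdiff (Suc i) f) - t (divdiff i (divdiff (Suc i) f))"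
      unfolding t_def using divdiff_eq[of "Suc i"] dSi by simp
    have "sv (Suc i) ((x-y)*divdiff i (divdiff (Suc i) f)) = sv (Suc i) (divdiff (Suc i) f - s (divdiff (Suc i) f))"
      unfolding s_def using divdiff_eq[of i "divdiff (Suc i) f"] di by simp
    then show "(x-z)*t (divdiff i (divdiff (Suc i) f)) = divdiff (Suc i) f - t (s (divdiff (Suc i) f))"
      unfolding t_def by (simp add: tx ty tz sv_dd)
    have "sv i ((y-z)*divdiff (Suc i) f) = sv i (f - t f)"
      unfolding t_def using divdiff_eq[of "Suc i" f] dSi by simp
    then show e5: "(x-z)*s (divdiff (Suc i) f) = s f - s (t f)"
      unfolding s_def by (simp add: sx sy sz)
    have "sv (Suc i) ((x-z)*s (divdiff (Suc i) f)) = sv (Suc i) (s f - s (t f))" using e5 by simp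
    then show "(x-y)*t (s (divdiff (Suc i) f)) = t (s f) - t (s (t f))"
      unfolding t_def by (simp add: tx ty tz)
  qed
  have "t (s (t f)) = s (t (s f))" unfolding s_def t_def by (rule sv_braid[symmetric])
  hence "f - s f - t f + t (s f) + s (t f) - s (t (s f)) = f - t f - s f + s (t f) + t (s f) - t (s (t f))"
    by (simp add: algebra_simps)
  with L R D0 have "((x-y)*(x-z)*(y-z)) * divdiff i (divdiff (Suc i) (divdiff i f)) = ((x-y)*(x-z)*(y-z)) * divdiff (Suc i) (divdiff i (divdiff (Suc i) f))"
    by (metis mult_left_cancel)
  with D0 show ?thesis by (metis mult_left_cancel)
qed

definition INV :: "nat \<Rightarrow> (nat \<Rightarrow> nat) \<Rightarrow> (nat \<times> nat) set" where
  "INV n w = {(i,j). 1 \<le> i \<and> i < j \<and> j \<le> n \<and> w j < w i}"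

lemma inv_length_INV: "inv_length n w = card (INV n w)"
  unfolding inv_length_def INV_def by simp

lemma INV_sub: "INV n w \<subseteq> {1..n} \<times> {1..n}"
  unfolding INV_def by auto

lemma finite_INV[simp]: "finite (INV n w)"
  by (rule finite_subset[OF INV_sub]) simp

lemma inv_length_le: "inv_length n w \<le> n * n"
proof -
  have "card (INV n w) \<le> card ({1..n} \<times> {1..n})" by (rule card_mono[OF _ INV_sub]) simp
  thus ?thesis by (simp add: inv_length_INV)
qed

lemma perm_sw: "w permutes {1..n} \<Longrightarrow> 1 \<le> i \<Longrightarrow> i < n \<Longrightarrow> (w \<circ> sw i) permutes {1..n}"
  unfolding sw_def by (rule permutes_compose[OF permutes_swap_id]) auto

lemma comp_sw_apply: "(w \<circ> sw i) k = (if k = i then w (Suc i) else if k = Suc i then w i else w k)"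
  by (simp add: sw_def transpose_def)

lemma INV_sw:
  assumes asc: "w i < w (Suc i)" and i: "1 \<le> i" "i < n"
  shows "INV n (w \<circ> sw i) = insert (i, Suc i) ((\<lambda>(p,q). (sw i p, sw i q)) ` INV n w)"
proof (rule set_eqI, rule iffI)
  fix pq assume pq: "pq \<in> INV n (w \<circ> sw i)"
  obtain p q where pq_eq: "pq = (p,q)" by (cases pq)
  show "pq \<in> insert (i, Suc i) ((\<lambda>(p,q). (sw i p, sw i q)) ` INV n w)"
  proof (cases "pq = (i, Suc i)")
    case True then show ?thesis by simp
  next
    case False
    have "(sw i p, sw i q) \<in> INV n w"
      using pq False i unfolding pq_eq INV_def by (auto simp: sw_def transpose_def split: if_splits)
    moreover have "pq = (sw i (sw i p), sw i (sw i q))" using pq_eq by simp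
    ultimately show ?thesis by force
  qed
next
  fix pq assume pq: "pq \<in> insert (i, Suc i) ((\<lambda>(p,q). (sw i p, sw i q)) ` INV n w)"
  show "pq \<in> INV n (w \<circ> sw i)"
  proof (cases "pq = (i, Suc i)")
    case True then show ?thesis using asc i unfolding INV_def by (simp add: sw_def)
  next
    case False
    with pq obtain p q where pq_eq: "pq = (sw i p, sw i q)" and pqI: "(p,q) \<in> INV n w" by auto
    have "(p,q) \<noteq> (i, Suc i)" using pqI asc unfolding INV_def by auto
    then show ?thesis using pqI i unfolding pq_eq INV_def by (auto simp: sw_def transpose_def)
  qed
qed

lemma inv_length_sw_asc:
  assumes asc: "w i < w (Suc i)" and i: "1 \<le> i" "i < n"
  shows "inv_length n (w \<circ> sw i) = inv_length n w + 1"
proof -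
  have inj_sw: "inj (sw i)" by (metis injI sw_sw)
  have inj: "inj_on (\<lambda>(p,q). (sw i p, sw i q)) (INV n w)"
    by (rule inj_onI) (auto simp: inj_eq[OF inj_sw])
  have nin: "(i, Suc i) \<notin> (\<lambda>(p,q). (sw i p, sw i q)) ` INV n w"
  proof
    assume "(i, Suc i) \<in> (\<lambda>(p,q). (sw i p, sw i q)) ` INV n w"
    then obtain p q where "(p,q) \<in> INV n w" "sw i p = i" "sw i q = Suc i" by auto
    then have "p = Suc i" "q = i" by (metis sw_sw sw_i sw_Si)+
    with \<open>(p,q) \<in> INV n w\<close> show False unfolding INV_def by auto
  qed
  show ?thesis unfolding inv_length_INV INV_sw[OF assms]
    by (simp add: card_insert_disjoint nin card_image[OF inj])
qed

lemma comp_sw_sw: "w \<circ> sw i \<circ> sw i = w"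
  by (rule ext) simp

lemma inv_length_sw_desc:
  assumes desc: "w (Suc i) < w i" and i: "1 \<le> i" "i < n"
  shows "inv_length n w = inv_length n (w \<circ> sw i) + 1"
proof -
  have "(w \<circ> sw i) i < (w \<circ> sw i) (Suc i)" using desc by (simp add: comp_sw_apply)
  from inv_length_sw_asc[OF this i] have "inv_length n (w \<circ> sw i \<circ> sw i) = inv_length n (w \<circ> sw i) + 1" .
  thus ?thesis by (simp only: comp_sw_sw)
qed

lemma longest_permutes: "longest n permutes {1..n}"
  unfolding permutes_def
proof (intro conjI allI impI)
  fix x assume "x \<notin> {1..n}" then show "longest n x = x" by (auto simp: longest_def)
next
  fix y
  have inv: "longest n (longest n k) = k" for k by (auto simp: longest_def)
  show "\<exists>!x. longest n x = y"
    by (rule ex1I[of _ "longest n y"]) (simp add: inv, metis inv)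
qed

lemma perm_range: "w permutes {1..n} \<Longrightarrow> 1 \<le> k \<Longrightarrow> k \<le> n \<Longrightarrow> 1 \<le> w k \<and> w k \<le> n"
  using permutes_in_image[of w "{1..n}" k] by auto

lemma perm_outside: "w permutes {1..n} \<Longrightarrow> k \<notin> {1..n} \<Longrightarrow> w k = k"
  by (rule permutes_not_in)

lemma no_asc_longest:
  assumes w: "w permutes {1..n}" and d: "\<And>i. 1 \<le> i \<Longrightarrow> i < n \<Longrightarrow> w (Suc i) < w i"
  shows "w = longest n"
proof (rule ext)
  fix k
  have up: "w k \<le> n + 1 - k" if "1 \<le> k" "k \<le> n" for k
    using that
  proof (induction k)
    case 0 then show ?case by simp
  next
    case (Suc k)
    show ?case
    proof (cases "k = 0")
      case True then show ?thesis using perm_range[OF w, of 1] Suc.prems by simp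
    next
      case False
      then have "w k \<le> n + 1 - k" using Suc by simp
      moreover have "w (Suc k) < w k" using d[of k] False Suc.prems by simp
      ultimately show ?thesis by simp
    qed
  qed
  have down: "n + 1 - k \<le> w k" if "1 \<le> k" "k \<le> n" for k
  proof -
    have "\<forall>k. 1 \<le> k \<longrightarrow> k \<le> n \<longrightarrow> n - k = d \<longrightarrow> n + 1 - k \<le> w k" for d
    proof (induction d)
      case 0 then show ?case using perm_range[OF w] by fastforce
    next
      case (Suc d)
      show ?case
      proof (intro allI impI)
        fix k assume k: "1 \<le> k" "k \<le> n" "n - k = Suc d"
        then have "n + 1 - Suc k \<le> w (Suc k)" using Suc.IH[rule_format, of "Suc k"] by simp
        moreover have "w (Suc k) < w k" using d[of k] k by simp
        ultimately show "n + 1 - k \<le> w k" using k by simp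
      qed
    qed
    then show ?thesis using that by blast
  qed
  show "w k = longest n k"
  proof (cases "k \<in> {1..n}")
    case True then show ?thesis using up[of k] down[of k] by (simp add: longest_def)
  next
    case False then show ?thesis using perm_outside[OF w False] by (auto simp: longest_def)
  qed
qed

lemma no_desc_id:
  assumes w: "w permutes {1..n}" and d: "\<And>i. 1 \<le> i \<Longrightarrow> i < n \<Longrightarrow> w i < w (Suc i)"
  shows "w = id"
proof (rule ext)
  fix k
  have up: "k \<le> w k" if "1 \<le> k" "k \<le> n" for k
    using that
  proof (induction k)
    case 0 then show ?case by simp
  next
    case (Suc k)
    show ?case
    proof (cases "k = 0")
      case True then show ?thesis using perm_range[OF w, of 1] Suc.prems by simp
    next
      case False
      then have "k \<le> w k" using Suc by simp
      moreover have "w k < w (Suc k)" using d[of k] False Suc.prems by simp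
      ultimately show ?thesis by simp
    qed
  qed
  have down: "w k \<le> k" if "1 \<le> k" "k \<le> n" for k
  proof -
    have "\<forall>k. 1 \<le> k \<longrightarrow> k \<le> n \<longrightarrow> n - k = d \<longrightarrow> w k \<le> k" for d
    proof (induction d)
      case 0 then show ?case using perm_range[OF w] by fastforce
    next
      case (Suc d)
      show ?case
      proof (intro allI impI)
        fix k assume k: "1 \<le> k" "k \<le> n" "n - k = Suc d"
        then have "w (Suc k) \<le> Suc k" using Suc.IH[rule_format, of "Suc k"] by simp
        moreover have "w k < w (Suc k)" using d[of k] k by simp
        ultimately show "w k \<le> k" by simp
      qed
    qed
    then show ?thesis using that by blast
  qed
  show "w k = id k"
  proof (cases "k \<in> {1..n}")
    case True then show ?thesis using up[of k] down[of k] by simp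
  next
    case False then show ?thesis using perm_outside[OF w False] by simp
  qed
qed

definition TT :: "nat \<Rightarrow> (nat \<times> nat) set" where
  "TT n = {(i,j). 1 \<le> i \<and> i < j \<and> j \<le> n}"

lemma INV_longest: "INV n (longest n) = TT n"
  unfolding INV_def TT_def longest_def by auto

lemma card_TT_Suc: "card (TT (Suc n)) = card (TT n) + n"
proof -
  have eq: "TT (Suc n) = TT n \<union> (\<lambda>i. (i, Suc n)) ` {1..n}" unfolding TT_def by auto
  have fin: "finite (TT n)" by (rule finite_subset[of _ "{1..n} \<times> {1..n}"]) (auto simp: TT_def)
  have disj: "TT n \<inter> (\<lambda>i. (i, Suc n)) ` {1..n} = {}" unfolding TT_def by auto
  have "card ((\<lambda>i. (i, Suc n)) ` {1..n}) = n" by (subst card_image) (auto simp: inj_on_def)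
  then show ?thesis unfolding eq using fin disj by (simp add: card_Un_disjoint)
qed

lemma inv_length_zero_id:
  assumes w: "w permutes {1..n}" and z: "inv_length n w = 0"
  shows "w = id"
proof (rule no_desc_id[OF w])
  fix i assume i: "1 \<le> i" "i < n"
  show "w i < w (Suc i)"
  proof (rule ccontr)
    assume "\<not> w i < w (Suc i)"
    moreover have "w i \<noteq> w (Suc i)" using permutes_inj[OF w] by (metis injD n_not_Suc_n)
    ultimately have "(i, Suc i) \<in> INV n w" using i unfolding INV_def by auto
    then have "card (INV n w) \<noteq> 0" by (auto simp: card_eq_0_iff)
    with z show False by (simp add: inv_length_INV)
  qed
qed

abbreviation asc_at :: "nat \<Rightarrow> (nat \<Rightarrow> nat) \<Rightarrow> nat \<Rightarrow> bool" where
  "asc_at n w i \<equiv> 1 \<le> i \<and> i < n \<and> w i < w (Suc i)"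

function schub :: "nat \<Rightarrow> (nat \<Rightarrow> nat) \<Rightarrow> mpoly" where
  "schub n w = (if w permutes {1..n} then
     (if (\<exists>i. asc_at n w i) then
        divdiff (LEAST i. asc_at n w i) (schub n (w \<circ> sw (LEAST i. asc_at n w i)))
      else staircase n)
    else 0)"
  by pat_completeness auto
termination
proof (relation "measure (\<lambda>(n,w). n * n - inv_length n w)")
  show "wf (measure (\<lambda>(n,w). n * n - inv_length n w))" by simp
next
  fix n w
  assume p: "w permutes {1..n}" and ex: "\<exists>i. asc_at n w i"
  define j where "j = (LEAST i. asc_at n w i)"
  have j: "asc_at n w j" unfolding j_def by (rule LeastI_ex[OF ex])
  have "inv_length n (w \<circ> sw j) = inv_length n w + 1"
    using j by (intro inv_length_sw_asc) auto
  moreover have "inv_length n (w \<circ> sw j) \<le> n * n" by (rule inv_length_le)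
  ultimately have "((n, w \<circ> sw j), n, w) \<in> measure (\<lambda>(n,w). n * n - inv_length n w)"
    by simp
  then show "((n, w \<circ> sw (LEAST i. asc_at n w i)), n, w) \<in> measure (\<lambda>(n,w). n * n - inv_length n w)"
    unfolding j_def .
qed

declare schub.simps[simp del]

lemma schub_not_perm: "\<not> w permutes {1..n} \<Longrightarrow> schub n w = 0"
  by (subst schub.simps) simp

lemma longest_no_asc: "\<nexists>i. asc_at n (longest n) i"
  by (auto simp: longest_def)

lemma schub_longest: "schub n (longest n) = staircase n"
  using longest_permutes[of n] longest_no_asc[of n] by (subst schub.simps) auto

lemma schub_least:
  assumes "w permutes {1..n}" "\<exists>i. asc_at n w i"
  shows "schub n w = divdiff (LEAST i. asc_at n w i) (schub n (w \<circ> sw (LEAST i. asc_at n w i)))"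
  using assms by (subst schub.simps) simp

lemma comp_sw_comm: assumes "Suc i < j" shows "w \<circ> sw i \<circ> sw j = w \<circ> sw j \<circ> sw i"
proof (rule ext)
  fix x have "sw i (sw j x) = sw j (sw i x)" by (rule sw_comm[OF assms])
  then show "(w \<circ> sw i \<circ> sw j) x = (w \<circ> sw j \<circ> sw i) x" by simp
qed

lemma comp_sw_braid: "w \<circ> sw j \<circ> sw (Suc j) \<circ> sw j = w \<circ> sw (Suc j) \<circ> sw j \<circ> sw (Suc j)"
  by (rule ext) (simp add: sw_braid)

lemma schub_asc:
  "w permutes {1..n} \<Longrightarrow> asc_at n w i \<Longrightarrow> schub n w = divdiff i (schub n (w \<circ> sw i))"
proof (induction w arbitrary: i rule: measure_induct_rule[of "\<lambda>w. n * n - inv_length n w"])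
  case (less w)
  have IH: "schub n v = divdiff k (schub n (v \<circ> sw k))"
    if "v permutes {1..n}" "inv_length n w < inv_length n v" "asc_at n v k" for v k
  proof -
    have "inv_length n v \<le> n * n" by (rule inv_length_le)
    then have "n * n - inv_length n v < n * n - inv_length n w" using that(2) by simp
    then show ?thesis using less.IH that(1,3) by blast
  qed
  have p: "w permutes {1..n}" and ai: "asc_at n w i" by fact+
  define j where "j = (LEAST i. asc_at n w i)"
  have aj: "asc_at n w j" unfolding j_def using ai by (rule LeastI)
  have ji: "j \<le> i" unfolding j_def using ai by (rule Least_le)
  have sw_j: "schub n w = divdiff j (schub n (w \<circ> sw j))"
    unfolding j_def using schub_least[OF p] ai by blast
  have len1: "inv_length n (v \<circ> sw k) = inv_length n v + 1" if "asc_at n v k" for v k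
    using that by (intro inv_length_sw_asc) auto
  consider "j = i" | "Suc j < i" | "i = Suc j" using ji by linarith
  then show ?case
  proof cases
    case 1 then show ?thesis using sw_j by (simp only:)
  next
    case 2
    define v1 where "v1 = w \<circ> sw j"
    define v2 where "v2 = w \<circ> sw i"
    have pv1: "v1 permutes {1..n}" unfolding v1_def using p aj by (intro perm_sw) auto
    have pv2: "v2 permutes {1..n}" unfolding v2_def using p ai by (intro perm_sw) auto
    have a1: "asc_at n v1 i" unfolding v1_def using ai 2 by (auto simp: comp_sw_apply sw_other)
    have a2: "asc_at n v2 j" unfolding v2_def using aj 2 by (auto simp: comp_sw_apply sw_other)
    have l1: "inv_length n w < inv_length n v1" unfolding v1_def using len1[OF aj] by simp
    have l2: "inv_length n w < inv_length n v2" unfolding v2_def using len1[OF ai] by simp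
    have "schub n w = divdiff j (schub n v1)" using sw_j unfolding v1_def .
    also have "schub n v1 = divdiff i (schub n (v1 \<circ> sw i))" by (rule IH[OF pv1 l1 a1])
    also have "v1 \<circ> sw i = v2 \<circ> sw j" unfolding v1_def v2_def by (rule comp_sw_comm[OF 2])
    also have "divdiff j (divdiff i (schub n (v2 \<circ> sw j))) = divdiff i (divdiff j (schub n (v2 \<circ> sw j)))"
      by (rule dd_comm[OF 2])
    also have "divdiff j (schub n (v2 \<circ> sw j)) = schub n v2" using IH[OF pv2 l2 a2] by simp
    finally show ?thesis unfolding v2_def .
  next
    case 3
    define u1 where "u1 = w \<circ> sw j"
    define u2 where "u2 = u1 \<circ> sw (Suc j)"
    define v1 where "v1 = w \<circ> sw (Suc j)"
    define v2 where "v2 = v1 \<circ> sw j"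
    have ai': "asc_at n w (Suc j)" using ai 3 by simp
    have pu1: "u1 permutes {1..n}" unfolding u1_def using p aj by (intro perm_sw) auto
    have au1: "asc_at n u1 (Suc j)" unfolding u1_def using ai' aj by (auto simp: comp_sw_apply sw_other)
    have pu2: "u2 permutes {1..n}" unfolding u2_def using pu1 au1 by (intro perm_sw) auto
    have au2: "asc_at n u2 j" unfolding u2_def u1_def using ai' aj by (auto simp: comp_sw_apply sw_other)
    have pv1: "v1 permutes {1..n}" unfolding v1_def using p ai' by (intro perm_sw) auto
    have av1: "asc_at n v1 j" unfolding v1_def using ai' aj by (auto simp: comp_sw_apply sw_other)
    have pv2: "v2 permutes {1..n}" unfolding v2_def using pv1 av1 by (intro perm_sw) auto
    have av2: "asc_at n v2 (Suc j)" unfolding v2_def v1_def using ai' aj by (auto simp: comp_sw_apply sw_other)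
    have lu1: "inv_length n w < inv_length n u1" unfolding u1_def using len1[OF aj] by simp
    have lu2: "inv_length n w < inv_length n u2" unfolding u2_def using len1[OF au1] lu1 by simp
    have lv1: "inv_length n w < inv_length n v1" unfolding v1_def using len1[OF ai'] by simp
    have lv2: "inv_length n w < inv_length n v2" unfolding v2_def using len1[OF av1] lv1 by simp
    have "schub n w = divdiff j (schub n u1)" using sw_j unfolding u1_def .
    also have "schub n u1 = divdiff (Suc j) (schub n u2)" using IH[OF pu1 lu1 au1] unfolding u2_def .
    also have "schub n u2 = divdiff j (schub n (u2 \<circ> sw j))" by (rule IH[OF pu2 lu2 au2])
    also have "u2 \<circ> sw j = v2 \<circ> sw (Suc j)" unfolding u2_def u1_def v2_def v1_def by (rule comp_sw_braid)
    also have "divdiff j (divdiff (Suc j) (divdiff j (schub n (v2 \<circ> sw (Suc j))))) =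
               divdiff (Suc j) (divdiff j (divdiff (Suc j) (schub n (v2 \<circ> sw (Suc j)))))"
      by (rule dd_braid)
    also have "divdiff j (divdiff (Suc j) (schub n (v2 \<circ> sw (Suc j)))) = schub n v1"
      using IH[OF pv1 lv1 av1] IH[OF pv2 lv2 av2] unfolding v2_def[symmetric] by (simp only:)
    finally have "schub n w = divdiff (Suc j) (schub n v1)" .
    thus ?thesis unfolding v1_def 3 .
  qed
qed

lemma schub_desc:
  assumes p: "w permutes {1..n}" and i: "1 \<le> i" "i < n" and d: "w (Suc i) < w i"
  shows "divdiff i (schub n w) = schub n (w \<circ> sw i)"
proof -
  have pv: "(w \<circ> sw i) permutes {1..n}" using p i by (rule perm_sw)
  have "asc_at n (w \<circ> sw i) i" using i d by (simp add: comp_sw_apply)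
  from schub_asc[OF pv this] have "schub n (w \<circ> sw i) = divdiff i (schub n (w \<circ> sw i \<circ> sw i))" .
  thus ?thesis unfolding comp_sw_sw by (rule sym)
qed

lemma schub_asc_zero:
  assumes p: "w permutes {1..n}" and a: "asc_at n w i"
  shows "divdiff i (schub n w) = 0"
  using schub_asc[OF p a] by (simp add: dd_dd)

lemma perm_neq: "w permutes {1..n} \<Longrightarrow> w i \<noteq> w (Suc i)"
  using permutes_inj by (metis injD n_not_Suc_n)

lemma schub_family: "is_schubert_family n (schub n)"
  unfolding is_schubert_family_def sw_def[symmetric]
proof (intro conjI allI impI)
  show "schub n (longest n) = staircase n" by (rule schub_longest)
next
  fix w i assume a: "w permutes {1..n} \<and> 1 \<le> i \<and> i < n"
  then have p: "w permutes {1..n}" and i: "1 \<le> i" "i < n" by auto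
  show "divdiff i (schub n w) = (if inv_length n (w \<circ> sw i) + 1 = inv_length n w then schub n (w \<circ> sw i) else 0)"
  proof (cases "w i < w (Suc i)")
    case True
    then show ?thesis using schub_asc_zero[OF p] i inv_length_sw_asc[OF True i] by simp
  next
    case False
    then have d: "w (Suc i) < w i" using perm_neq[OF p, of i] by simp
    show ?thesis using schub_desc[OF p i d] inv_length_sw_desc[OF d i] by simp
  qed
qed

lemma perm_not_longest_asc:
  assumes p: "w permutes {1..n}" and ne: "w \<noteq> longest n"
  shows "\<exists>i. asc_at n w i"
proof (rule ccontr)
  assume "\<nexists>i. asc_at n w i"
  then have "\<And>i. 1 \<le> i \<Longrightarrow> i < n \<Longrightarrow> w (Suc i) < w i" using perm_neq[OF p] by (metis linorder_neqE_nat)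
  then have "w = longest n" by (rule no_asc_longest[OF p])
  with ne show False ..
qed

lemma family_unique:
  assumes F: "is_schubert_family n S" and Z: "\<forall>v. \<not> v permutes {1..n} \<longrightarrow> S v = 0"
  shows "S w = schub n w"
proof (induction w rule: measure_induct_rule[of "\<lambda>w. n * n - inv_length n w"])
  case (less w)
  show ?case
  proof (cases "w permutes {1..n}")
    case False then show ?thesis using Z schub_not_perm by simp
  next
    case p: True
    show ?thesis
    proof (cases "w = longest n")
      case True then show ?thesis using F schub_longest unfolding is_schubert_family_def by simp
    next
      case False
      then obtain i where ai: "asc_at n w i" using perm_not_longest_asc[OF p] by blast
      define v where "v = w \<circ> sw i"
      have pv: "v permutes {1..n}" unfolding v_def using p ai by (intro perm_sw) auto
      have lv: "inv_length n v = inv_length n w + 1" unfolding v_def using ai by (intro inv_length_sw_asc) auto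
      have dv: "v (Suc i) < v i" unfolding v_def using ai by (simp add: comp_sw_apply)
      have lv2: "inv_length n v = inv_length n (v \<circ> sw i) + 1" using inv_length_sw_desc[OF dv] ai by simp
      have vw: "v \<circ> sw i = w" unfolding v_def by (rule comp_sw_sw)
      have "S w = divdiff i (S v)"
        using F pv ai lv2 vw unfolding is_schubert_family_def sw_def[symmetric] by auto
      moreover have "schub n w = divdiff i (schub n v)"
        using schub_desc[OF pv _ _ dv] ai vw by simp
      moreover have "S v = schub n v"
      proof -
        have "inv_length n v \<le> n * n" by (rule inv_length_le)
        then show ?thesis using less.IH lv by simp
      qed
      ultimately show ?thesis by simp
    qed
  qed
qed

lemma schubert_eq: "schubert n = schub n"
proof -
  have "(THE S. is_schubert_family n S \<and> (\<forall>v. \<not> v permutes {1..n} \<longrightarrow> S v = 0)) = schub n"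
  proof (rule the_equality)
    show "is_schubert_family n (schub n) \<and> (\<forall>v. \<not> v permutes {1..n} \<longrightarrow> schub n v = 0)"
      using schub_family schub_not_perm by blast
  next
    fix S assume "is_schubert_family n S \<and> (\<forall>v. \<not> v permutes {1..n} \<longrightarrow> S v = 0)"
    then show "S = schub n" using family_unique by blast
  qed
  then show ?thesis unfolding schubert_def by (intro ext) simp
qed

definition Box :: "(nat \<Rightarrow> nat) \<Rightarrow> mpoly \<Rightarrow> bool" where
  "Box \<beta> f \<longleftrightarrow> (\<forall>m \<in> Poly_Mapping.keys f. \<forall>k. lkp m k \<le> \<beta> k)"

lemma Box_zero[simp]: "Box \<beta> 0" unfolding Box_def by simp

lemma Box_diff: "Box \<beta> f \<Longrightarrow> Box \<beta> g \<Longrightarrow> Box \<beta> (f - g)"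
  unfolding Box_def by (metis diff_zero in_keys_iff lookup_minus)

lemma Box_add: "Box \<beta> f \<Longrightarrow> Box \<beta> g \<Longrightarrow> Box \<beta> (f + g)"
  unfolding Box_def by (metis add.right_neutral in_keys_iff lookup_add)

lemma Box_uminus: "Box \<beta> f \<Longrightarrow> Box \<beta> (- f)"
  unfolding Box_def by simp

lemma Box_mono: "Box \<beta> f \<Longrightarrow> (\<And>k. \<beta> k \<le> \<beta>' k) \<Longrightarrow> Box \<beta>' f"
  unfolding Box_def using order_trans by blast

lemma Box_mult: "Box \<beta>1 f \<Longrightarrow> Box \<beta>2 g \<Longrightarrow> Box (\<lambda>k. \<beta>1 k + \<beta>2 k) (f * g)"
  unfolding Box_def
proof (intro ballI allI)
  fix m k assume f: "\<forall>m\<in>Poly_Mapping.keys f. \<forall>k. lkp m k \<le> \<beta>1 k"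
    and g: "\<forall>m\<in>Poly_Mapping.keys g. \<forall>k. lkp m k \<le> \<beta>2 k"
    and m: "m \<in> Poly_Mapping.keys (f * g)"
  then obtain a b where "m = a + b" "a \<in> Poly_Mapping.keys f" "b \<in> Poly_Mapping.keys g"
    using keys_mult by blast
  then show "lkp m k \<le> \<beta>1 k + \<beta>2 k" using f g by (simp add: lookup_add add_mono)
qed

lemma Box_mon: "(\<And>k. lkp m k \<le> \<beta> k) \<Longrightarrow> Box \<beta> (mon m)"
  unfolding Box_def mon_def by simp

definition gam :: "nat \<Rightarrow> nat \<Rightarrow> nat \<Rightarrow> nat" where
  "gam i p k = (if k = i \<or> k = Suc i then p else 0)"

lemma mon_XY: "var i ^ a * var (Suc i) ^ b = mon (Poly_Mapping.single i a + Poly_Mapping.single (Suc i) b)"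
  by (simp add: var_power mon_add)

lemma sv_XY: "sv i (var i ^ a * var (Suc i) ^ b) = var i ^ b * var (Suc i) ^ a"
  by (simp add: pv_power)

lemma XY1: "b \<le> a \<Longrightarrow> Box (gam i (a - 1)) (divdiff i (var i ^ a * var (Suc i) ^ b))"
proof (induction a arbitrary: b)
  case 0 then show ?case by simp
next
  case (Suc a)
  show ?case
  proof (cases "b = Suc a")
    case True
    have "sv i (var i ^ Suc a * var (Suc i) ^ b) = var i ^ Suc a * var (Suc i) ^ b"
      unfolding sv_XY True by (simp add: mult.commute)
    then show ?thesis by (simp add: dd_sym)
  next
    case False
    then have ba: "b \<le> a" using Suc.prems by simp
    define Y where "Y = var i ^ a * var (Suc i) ^ b"
    have eq: "var i ^ Suc a * var (Suc i) ^ b = var i * Y" unfolding Y_def by (simp add: algebra_simps)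
    have dd: "divdiff i (var i ^ Suc a * var (Suc i) ^ b) = Y + var (Suc i) * divdiff i Y"
      unfolding eq dd_mult by (simp add: dd_var_i)
    have BY: "Box (gam i a) Y" unfolding Y_def mon_XY
      by (rule Box_mon) (use ba in \<open>auto simp: lookup_add lookup_single when_def gam_def\<close>)
    have B2: "Box (gam i a) (var (Suc i) * divdiff i Y)"
    proof (cases a)
      case 0
      then have "b = 0" using ba by simp
      then have "divdiff i Y = 0" unfolding Y_def using 0 by simp
      then show ?thesis by simp
    next
      case (Suc a')
      have B1: "Box (lkp (Poly_Mapping.single (Suc i) 1)) (var (Suc i))"
        unfolding var_def by (rule Box_mon) simp
      have "Box (\<lambda>k. lkp (Poly_Mapping.single (Suc i) 1) k + gam i (a - 1) k) (var (Suc i) * divdiff i Y)"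
        using Box_mult[OF B1 Suc.IH[OF ba]] unfolding Y_def .
      then show ?thesis
        by (rule Box_mono) (auto simp: lookup_single when_def gam_def Suc)
    qed
    show ?thesis unfolding dd using Box_add[OF BY B2] by simp
  qed
qed

lemma XY: "Box (gam i (max a b - 1)) (divdiff i (var i ^ a * var (Suc i) ^ b))"
proof (cases "b \<le> a")
  case True then show ?thesis using XY1[of b a i] by (simp add: max_def)
next
  case False
  have "divdiff i (var i ^ a * var (Suc i) ^ b) = - divdiff i (var i ^ b * var (Suc i) ^ a)"
    using dd_sv[of i "var i ^ b * var (Suc i) ^ a"] by (simp add: sv_XY)
  then show ?thesis using Box_uminus[OF XY1[of a b i]] False by (simp add: max_def)
qed

lemma dd_Box_mon:
  assumes x: "\<And>k. lkp x k \<le> \<beta> k" and b: "\<beta> i \<le> Suc (\<beta> (Suc i))" and b2: "\<beta> (Suc i) \<le> \<beta> i"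
  shows "Box \<beta> (divdiff i (mon x))"
proof -
  define a where "a = lkp x i"
  define b where "b = lkp x (Suc i)"
  define x' where "x' = Abs_poly_mapping (\<lambda>k. if k = i \<or> k = Suc i then 0 else lkp x k)"
  have fin: "finite {k. (if k = i \<or> k = Suc i then 0 else lkp x k) \<noteq> 0}"
    by (rule finite_subset[of _ "Poly_Mapping.keys x"]) (auto simp: in_keys_iff)
  have lx': "lkp x' k = (if k = i \<or> k = Suc i then 0 else lkp x k)" for k
    unfolding x'_def using fin by simp
  have xeq: "x = x' + Poly_Mapping.single i a + Poly_Mapping.single (Suc i) b"
    by (rule poly_mapping_eqI) (auto simp: lookup_add lx' lookup_single when_def a_def b_def)
  have "pm (sw i) x' = x'"
    by (rule poly_mapping_eqI) (auto simp: lookup_pm invol_inj lx' sw_other)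
  then have sym: "sv i (mon x') = mon x'" by (simp add: pv_mon)
  have "mon x = mon x' * (var i ^ a * var (Suc i) ^ b)"
    unfolding mon_XY xeq by (simp add: mon_add mult.assoc)
  then have E: "divdiff i (mon x) = mon x' * divdiff i (var i ^ a * var (Suc i) ^ b)"
    by (simp add: dd_sym_mult sym)
  have B: "Box (\<lambda>k. lkp x' k + gam i (max a b - 1) k) (mon x' * divdiff i (var i ^ a * var (Suc i) ^ b))"
    by (rule Box_mult[OF Box_mon XY]) simp
  have L: "lkp x' k + gam i (max a b - 1) k \<le> \<beta> k" for k
  proof -
    have ai: "a \<le> \<beta> i" "b \<le> \<beta> (Suc i)" using x unfolding a_def b_def by auto
    consider "k = i" | "k = Suc i" | "k \<noteq> i \<and> k \<noteq> Suc i" by blast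
    then show ?thesis
    proof cases
      case 1 then show ?thesis using ai b2 by (simp add: lx' gam_def)
    next
      case 2 then show ?thesis using ai b by (simp add: lx' gam_def)
    next
      case 3 then show ?thesis using x[of k] by (simp add: lx' gam_def)
    qed
  qed
  show ?thesis unfolding E by (rule Box_mono[OF B L])
qed

lemma dd_Box:
  assumes f: "Box \<beta> f" and b: "\<beta> i \<le> Suc (\<beta> (Suc i))" and b2: "\<beta> (Suc i) \<le> \<beta> i"
  shows "Box \<beta> (divdiff i f)"
proof -
  have "Poly_Mapping.keys f \<subseteq> {x. \<forall>k. lkp x k \<le> \<beta> k}" using f unfolding Box_def by auto
  then show ?thesis
  proof (induction f rule: frag_induction)
    case zero then show ?case by simp
  next
    case (one x) then show ?case using dd_Box_mon[OF _ b b2, of x] by (simp add: mon_def)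
  next
    case (diff a b) then show ?case by (simp add: dd_diff Box_diff)
  qed
qed

lemma prod_mon: "finite A \<Longrightarrow> (\<Prod>k\<in>A. mon (g k)) = mon (\<Sum>k\<in>A. g k)"
  by (induction A rule: finite_induct) (simp_all add: mon_zero mon_add)

definition stm :: "nat \<Rightarrow> nat \<Rightarrow>\<^sub>0 nat" where
  "stm n = (\<Sum>k\<in>{1..n}. Poly_Mapping.single k (n - k))"

lemma staircase_mon: "staircase n = mon (stm n)"
  unfolding staircase_def stm_def by (simp add: var_power prod_mon)

lemma lookup_stm: "lkp (stm n) j = (if 1 \<le> j \<and> j \<le> n then n - j else 0)"
  unfolding stm_def lookup_sum by (simp add: lookup_single when_def)

definition dlt_n :: "nat \<Rightarrow> nat \<Rightarrow> nat" where "dlt_n n k = n - k"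

lemma Box_staircase: "Box (dlt_n n) (staircase n)"
  unfolding staircase_mon by (rule Box_mon) (simp add: lookup_stm dlt_n_def)

lemma Box_schub: "Box (dlt_n n) (schub n w)"
proof (induction w rule: measure_induct_rule[of "\<lambda>w. n * n - inv_length n w"])
  case (less w)
  show ?case
  proof (cases "w permutes {1..n}")
    case False then show ?thesis using schub_not_perm by simp
  next
    case p: True
    show ?thesis
    proof (cases "\<exists>i. asc_at n w i")
      case False
      then have "schub n w = staircase n" using p by (subst schub.simps) auto
      then show ?thesis using Box_staircase by simp
    next
      case True
      define j where "j = (LEAST i. asc_at n w i)"
      have aj: "asc_at n w j" unfolding j_def by (rule LeastI_ex[OF True])
      have e: "schub n w = divdiff j (schub n (w \<circ> sw j))" unfolding j_def by (rule schub_least[OF p True])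
      have "inv_length n (w \<circ> sw j) = inv_length n w + 1" using aj by (intro inv_length_sw_asc) auto
      moreover have "inv_length n (w \<circ> sw j) \<le> n * n" by (rule inv_length_le)
      ultimately have "Box (dlt_n n) (schub n (w \<circ> sw j))" using less.IH by simp
      moreover have "dlt_n n j \<le> Suc (dlt_n n (Suc j))" by (simp add: dlt_n_def)
      moreover have "dlt_n n (Suc j) \<le> dlt_n n j" by (simp add: dlt_n_def)
      ultimately show ?thesis unfolding e by (rule dd_Box)
    qed
  qed
qed

lemma Box_sym:
  assumes f: "Box \<beta> f" and z: "\<beta> i = 0" "\<beta> (Suc i) = 0"
  shows "sv i f = f"
proof (rule poly_mapping_eqI)
  fix m
  show "lkp (sv i f) m = lkp f m"
  proof (cases "lkp m i = 0 \<and> lkp m (Suc i) = 0")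
    case True
    have "pm (sw i) m = m"
    proof (rule poly_mapping_eqI)
      fix k show "lkp (pm (sw i) m) k = lkp m k"
        using True by (cases "k = i"; cases "k = Suc i") (auto simp: lookup_pm invol_inj sw_other)
    qed
    then show ?thesis by (simp add: lookup_pv)
  next
    case False
    have "m \<notin> Poly_Mapping.keys f" using f z False unfolding Box_def by (metis le_zero_eq)
    moreover have "pm (sw i) m \<notin> Poly_Mapping.keys f"
      using f z False unfolding Box_def by (metis le_zero_eq lookup_pm invol_inj inv_sw sw_i sw_Si)
    ultimately show ?thesis by (simp add: lookup_pv in_keys_iff)
  qed
qed

lemma schub_sym_n: "sv n (schub n w) = schub n w"
  by (rule Box_sym[OF Box_schub]) (simp_all add: dlt_n_def)

definition ex :: "nat \<Rightarrow> nat \<Rightarrow> nat \<Rightarrow> nat" where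
  "ex m k j = (if j \<le> k then m - 1 - j else if j = Suc k then m - 1 - k else m - j)"

definition EE :: "nat \<Rightarrow> nat \<Rightarrow> nat \<Rightarrow>\<^sub>0 nat" where
  "EE m k = (\<Sum>j\<in>{1..m}. Poly_Mapping.single j (ex m k j))"

lemma lookup_EE: "lkp (EE m k) j = (if 1 \<le> j \<and> j \<le> m then ex m k j else 0)"
  unfolding EE_def lookup_sum by (simp add: lookup_single when_def)

lemma EE_step: "Suc (Suc k) \<le> m \<Longrightarrow> EE m k = EE m (Suc k) + Poly_Mapping.single (Suc k) 1"
  by (rule poly_mapping_eqI) (auto simp: lookup_EE lookup_add lookup_single when_def ex_def)

lemma EE_sym: "Suc (Suc k) \<le> m \<Longrightarrow> lkp (EE m (Suc k)) (Suc k) = lkp (EE m (Suc k)) (Suc (Suc k))"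
  by (auto simp: lookup_EE ex_def)

lemma EE_end: "EE (Suc m) m = EE m 0"
  by (rule poly_mapping_eqI) (auto simp: lookup_EE ex_def)

lemma EE_start: "EE n 0 = stm n"
  by (rule poly_mapping_eqI) (auto simp: lookup_EE lookup_stm ex_def)

lemma EE_0: "EE 0 0 = 0"
  unfolding EE_def by simp

lemma mon_nonzero: "mon x \<noteq> 0"
  unfolding mon_def by simp

lemma dd_mon_step:
  assumes s: "lkp x' i = lkp x' (Suc i)"
  shows "divdiff i (mon (x' + Poly_Mapping.single i 1)) = mon x'"
proof -
  have "pm (sw i) x' = x'"
  proof (rule poly_mapping_eqI)
    fix k show "lkp (pm (sw i) x') k = lkp x' k"
      using s by (cases "k = i"; cases "k = Suc i") (auto simp: lookup_pm invol_inj sw_other)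
  qed
  then have sym: "sv i (mon x') = mon x'" by (simp add: pv_mon)
  have "mon (x' + Poly_Mapping.single i 1) = mon x' * var i" by (simp add: mon_add var_def)
  then show ?thesis by (simp add: dd_sym_mult sym dd_var_i)
qed

lemma walk_step:
  assumes p: "w permutes {1..n}" and i: "1 \<le> i" "i < n"
    and e: "schub n w = mon (x' + Poly_Mapping.single i 1)" and s: "lkp x' i = lkp x' (Suc i)"
  shows "(w \<circ> sw i) permutes {1..n} \<and> schub n (w \<circ> sw i) = mon x' \<and> inv_length n (w \<circ> sw i) + 1 = inv_length n w"
proof -
  have dd: "divdiff i (schub n w) = mon x'" unfolding e by (rule dd_mon_step[OF s])
  have d: "w (Suc i) < w i"
  proof (rule ccontr)
    assume "\<not> w (Suc i) < w i"
    then have "w i < w (Suc i)" using perm_neq[OF p, of i] by simp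
    then have "divdiff i (schub n w) = 0" using schub_asc_zero[OF p] i by simp
    with dd mon_nonzero show False by simp
  qed
  show ?thesis using perm_sw[OF p i] schub_desc[OF p i d] dd inv_length_sw_desc[OF d i] by simp
qed

lemma stage:
  assumes mn: "m \<le> n" and p: "w permutes {1..n}" and e: "schub n w = mon (EE m 0)"
  shows "Suc k \<le> m \<Longrightarrow> \<exists>u. u permutes {1..n} \<and> schub n u = mon (EE m k) \<and> inv_length n u + k = inv_length n w"
proof (induction k)
  case 0 then show ?case using p e by auto
next
  case (Suc k)
  then obtain u where u: "u permutes {1..n}" "schub n u = mon (EE m k)" "inv_length n u + k = inv_length n w" by auto
  have k: "Suc (Suc k) \<le> m" using Suc.prems by simp
  have "schub n u = mon (EE m (Suc k) + Poly_Mapping.single (Suc k) 1)" using u(2) EE_step[OF k] by simp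
  from walk_step[OF u(1) _ _ this EE_sym[OF k]] k mn
  have "(u \<circ> sw (Suc k)) permutes {1..n} \<and> schub n (u \<circ> sw (Suc k)) = mon (EE m (Suc k)) \<and>
        inv_length n (u \<circ> sw (Suc k)) + 1 = inv_length n u" by simp
  then obtain u' where "u' permutes {1..n}" "schub n u' = mon (EE m (Suc k))" "inv_length n u' + 1 = inv_length n u"
    by blast
  then show ?case using u(3) by (intro exI[of _ u']) simp
qed

lemma all_stages:
  "m \<le> n \<Longrightarrow> \<exists>u. u permutes {1..n} \<and> schub n u = mon (EE m 0) \<and> inv_length n u = card (TT m)"
proof (induction "n - m" arbitrary: m)
  case 0
  then have "m = n" by simp
  then show ?case using longest_permutes[of n] schub_longest[of n]
    by (intro exI[of _ "longest n"]) (simp add: EE_start staircase_mon inv_length_INV INV_longest)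
next
  case (Suc d)
  then have m: "Suc m \<le> n" "d = n - Suc m" by auto
  from Suc.hyps(1)[OF m(2) m(1)] obtain u where
    u: "u permutes {1..n}" "schub n u = mon (EE (Suc m) 0)" "inv_length n u = card (TT (Suc m))" by blast
  from stage[OF m(1) u(1) u(2), of m] obtain u' where
    u': "u' permutes {1..n}" "schub n u' = mon (EE (Suc m) m)" "inv_length n u' + m = inv_length n u" by auto
  show ?case using u' u(3) card_TT_Suc[of m] by (intro exI[of _ u']) (simp add: EE_end)
qed

lemma schub_id: "schub n id = 1"
proof -
  obtain u where u: "u permutes {1..n}" "schub n u = mon (EE 0 0)" "inv_length n u = card (TT 0)"
    using all_stages[of 0 n] by auto
  have "TT 0 = {}" unfolding TT_def by auto
  then have "u = id" using inv_length_zero_id[OF u(1)] u(3) by simp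
  then show ?thesis using u(2) by (simp add: EE_0 mon_zero)
qed

lemma schub_nonzero: "v permutes {1..n} \<Longrightarrow> schub n v \<noteq> 0"
proof (induction "inv_length n v" arbitrary: v rule: less_induct)
  case less
  show ?case
  proof (cases "v = id")
    case True then show ?thesis by (simp add: schub_id)
  next
    case False
    then obtain i where i: "1 \<le> i" "i < n" and d: "v (Suc i) < v i"
      using no_desc_id[OF less.prems] perm_neq[OF less.prems] by (metis linorder_neqE_nat)
    have "inv_length n (v \<circ> sw i) < inv_length n v" using inv_length_sw_desc[OF d i] by simp
    then have "schub n (v \<circ> sw i) \<noteq> 0" using less.hyps perm_sw[OF less.prems i] by blast
    then show ?thesis using schub_desc[OF less.prems i d] by auto
  qed
qed

section \<open>Evaluation at all ones\<close>

definition ev :: "mpoly \<Rightarrow> int" where "ev f = Sum_any (lkp f)"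

lemma ev_add: "ev (f + g) = ev f + ev g"
  unfolding ev_def lookup_add by (rule Sum_any.distrib) simp_all

lemma ev_diff: "ev (f - g) = ev f - ev g"
  using ev_add[of "f - g" g] by simp

lemma ev_zero[simp]: "ev 0 = 0" unfolding ev_def by simp

lemma ev_mon: "ev (mon m) = 1"
proof -
  have "{a. lkp (mon m) a \<noteq> 0} = {m}" unfolding mon_def by (auto simp: lookup_single when_def)
  then show ?thesis unfolding ev_def Sum_any.expand_set by (simp add: mon_def)
qed

lemma ev_mult: "ev (f * g) = ev f * ev g"
proof -
  have "Poly_Mapping.keys f \<subseteq> UNIV" by simp
  then show ?thesis
  proof (induction f rule: frag_induction)
    case zero then show ?case by simp
  next
    case (diff a b) then show ?case by (simp add: left_diff_distrib ev_diff)
  next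
    case (one x)
    have "Poly_Mapping.keys g \<subseteq> UNIV" by simp
    then show ?case
    proof (induction g rule: frag_induction)
      case zero then show ?case by simp
    next
      case (diff a b) then show ?case by (simp add: right_diff_distrib ev_diff)
    next
      case (one y)
      show ?case using ev_mon[of "x + y"] ev_mon[of x] ev_mon[of y]
        by (simp add: mon_def mult_single)
    qed
  qed
qed

lemma ev_one: "ev 1 = 1" using ev_mon[of 0] by (simp add: mon_zero)

lemma ev_sum: "ev (sum f A) = (\<Sum>a\<in>A. ev (f a))"
  by (induction A rule: infinite_finite_induct) (simp_all add: ev_add)

lemma ev_prod: "ev (prod f A) = (\<Prod>a\<in>A. ev (f a))"
  by (induction A rule: infinite_finite_induct) (simp_all add: ev_one ev_mult)

lemma ev_var: "ev (var k) = 1" unfolding var_def by (rule ev_mon)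

lemma ev_nonzero: "ev f \<noteq> 0 \<Longrightarrow> f \<noteq> 0" by auto

definition SS :: "nat \<Rightarrow> nat \<Rightarrow> nat set set" where
  "SS i j = {S. S \<subseteq> {1..i} \<and> card S = j}"

lemma elem_SS: "elem i j = (\<Sum>S\<in>SS i j. \<Prod>k\<in>S. var k)"
  unfolding elem_def SS_def by simp

lemma finite_SS[simp]: "finite (SS i j)"
  unfolding SS_def by (rule finite_subset[of _ "Pow {1..i}"]) auto

lemma elem_nonzero: "j \<le> i \<Longrightarrow> elem i j \<noteq> 0"
proof -
  assume ji: "j \<le> i"
  have "{1..j} \<in> SS i j" unfolding SS_def using ji by auto
  then have "SS i j \<noteq> {}" by auto
  then have "card (SS i j) \<noteq> 0" by simp
  moreover have "ev (elem i j) = int (card (SS i j))"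
    unfolding elem_SS ev_sum ev_prod by (simp add: ev_var)
  ultimately show ?thesis by (intro ev_nonzero) simp
qed

lemma elem_0: "elem i 0 = 1"
proof -
  have "SS i 0 = {{}}" unfolding SS_def using finite_subset[of _ "{1..i}"] by fastforce
  then show ?thesis unfolding elem_SS by simp
qed

lemma pres_image: assumes s: "invol \<sigma>" and A: "\<And>x. x \<in> A \<longleftrightarrow> \<sigma> x \<in> A" shows "\<sigma> ` A = A"
proof
  show "\<sigma> ` A \<subseteq> A" using A by auto
  show "A \<subseteq> \<sigma> ` A"
  proof
    fix x assume "x \<in> A"
    then have "\<sigma> x \<in> A" using A by auto
    moreover have "x = \<sigma> (\<sigma> x)" using s unfolding invol_def by simp
    ultimately show "x \<in> \<sigma> ` A" by (rule rev_image_eqI)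
  qed
qed

lemma elem_pres:
  assumes s: "invol \<sigma>" and A: "\<And>x. x \<in> {1..i} \<longleftrightarrow> \<sigma> x \<in> {1..i}"
  shows "pv \<sigma> (elem i j) = elem i j"
proof -
  have inj: "inj \<sigma>" using s by (rule invol_inj)
  have ss: "\<sigma> (\<sigma> x) = x" for x using s unfolding invol_def by simp
  have "pv \<sigma> (elem i j) = (\<Sum>S\<in>SS i j. \<Prod>k\<in>\<sigma> ` S. var k)"
    unfolding elem_SS using s
    by (simp add: pv_sum pv_prod pv_var prod.reindex[OF inj_on_subset[OF inj]])
  also have "\<dots> = elem i j" unfolding elem_SS
  proof (rule sum.reindex_bij_witness[of _ "image \<sigma>" "image \<sigma>"])
    fix S assume "S \<in> SS i j"
    then show "\<sigma> ` \<sigma> ` S = S" by (simp add: image_image ss)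
  next
    fix S assume S: "S \<in> SS i j"
    then show "\<sigma> ` S \<in> SS i j" unfolding SS_def using A
      by (auto simp: card_image[OF inj_on_subset[OF inj]])
  next
    fix S assume "S \<in> SS i j"
    then show "\<sigma> ` \<sigma> ` S = S" by (simp add: image_image ss)
  next
    fix S assume S: "S \<in> SS i j"
    then show "\<sigma> ` S \<in> SS i j" unfolding SS_def using A
      by (auto simp: card_image[OF inj_on_subset[OF inj]])
  next
    fix S assume "S \<in> SS i j"
    then show "(\<Prod>k\<in>\<sigma> ` S. var k) = (\<Prod>k\<in>\<sigma> ` S. var k)" by simp
  qed
  finally show ?thesis .
qed

lemma sw_pres: "1 \<le> i \<Longrightarrow> j \<noteq> i \<Longrightarrow> x \<in> {1..j} \<longleftrightarrow> sw i x \<in> {1..j}"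
  by (cases "x = i"; cases "x = Suc i") (auto simp: sw_other)

lemma elem_sym: assumes "1 \<le> i" "j \<noteq> i" shows "sv i (elem j k) = elem j k"
  by (rule elem_pres[OF inv_sw sw_pres[OF assms]])

lemma elem_rec: "elem (Suc i) (Suc k) = elem i (Suc k) + var (Suc i) * elem i k"
proof -
  have eq: "SS (Suc i) (Suc k) = SS i (Suc k) \<union> insert (Suc i) ` SS i k"
  proof (rule set_eqI, rule iffI)
    fix S assume S: "S \<in> SS (Suc i) (Suc k)"
    show "S \<in> SS i (Suc k) \<union> insert (Suc i) ` SS i k"
    proof (cases "Suc i \<in> S")
      case False
      then have "S \<subseteq> {1..i}" using S unfolding SS_def by (auto simp: le_Suc_eq)
      then show ?thesis using S unfolding SS_def by auto
    next
      case True
      have fin: "finite S" using S unfolding SS_def by (auto intro: finite_subset)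
      have "S - {Suc i} \<in> SS i k" using S True fin unfolding SS_def by (auto simp: le_Suc_eq)
      moreover have "S = insert (Suc i) (S - {Suc i})" using True by auto
      ultimately show ?thesis by blast
    qed
  next
    fix S assume "S \<in> SS i (Suc k) \<union> insert (Suc i) ` SS i k"
    then show "S \<in> SS (Suc i) (Suc k)"
    proof
      assume "S \<in> SS i (Suc k)" then show ?thesis unfolding SS_def by auto
    next
      assume "S \<in> insert (Suc i) ` SS i k"
      then obtain T where T: "T \<in> SS i k" "S = insert (Suc i) T" by auto
      have "finite T" using T unfolding SS_def by (auto intro: finite_subset)
      moreover have "Suc i \<notin> T" using T unfolding SS_def by auto
      ultimately show ?thesis using T unfolding SS_def by auto
    qed
  qed
  have disj: "SS i (Suc k) \<inter> insert (Suc i) ` SS i k = {}" unfolding SS_def by auto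
  have inj: "inj_on (insert (Suc i)) (SS i k)"
  proof (rule inj_onI)
    fix S T assume S: "S \<in> SS i k" and T: "T \<in> SS i k" and e: "insert (Suc i) S = insert (Suc i) T"
    have "Suc i \<notin> S" "Suc i \<notin> T" using S T unfolding SS_def by auto
    then show "S = T" using e by (metis Diff_insert_absorb)
  qed
  have "(\<Sum>S\<in>insert (Suc i) ` SS i k. \<Prod>l\<in>S. var l) = (\<Sum>S\<in>SS i k. \<Prod>l\<in>insert (Suc i) S. var l)"
    by (rule sum.reindex[OF inj, unfolded comp_def])
  also have "\<dots> = (\<Sum>S\<in>SS i k. var (Suc i) * (\<Prod>l\<in>S. var l))"
  proof (rule sum.cong[OF refl])
    fix S assume S: "S \<in> SS i k"
    have "finite S" "Suc i \<notin> S" using S unfolding SS_def by (auto intro: finite_subset)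
    then show "(\<Prod>l\<in>insert (Suc i) S. var l) = var (Suc i) * (\<Prod>l\<in>S. var l)" by simp
  qed
  also have "\<dots> = var (Suc i) * elem i k" unfolding elem_SS by (simp add: sum_distrib_left)
  finally have 2: "(\<Sum>S\<in>insert (Suc i) ` SS i k. \<Prod>l\<in>S. var l) = var (Suc i) * elem i k" .
  show ?thesis unfolding elem_SS[of "Suc i"] eq
    by (subst sum.union_disjoint) (simp_all add: disj 2 elem_SS)
qed

lemma dd_elem: "divdiff (Suc i) (elem (Suc i) (Suc k)) = elem i k"
proof -
  have s1: "sv (Suc i) (elem i j) = elem i j" for j by (rule elem_sym) simp_all
  have "divdiff (Suc i) (elem (Suc i) (Suc k)) = divdiff (Suc i) (elem i k * var (Suc i))"
    unfolding elem_rec dd_add by (simp add: dd_sym s1 mult.commute)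
  also have "\<dots> = elem i k" by (simp add: dd_sym_mult s1 dd_var_i)
  finally show ?thesis .
qed

definition TS :: "nat \<Rightarrow> nat \<Rightarrow> (nat \<Rightarrow>\<^sub>0 nat) set" where
  "TS i j = {m. Poly_Mapping.keys m \<subseteq> {1..i} \<and> (\<Sum>k\<in>{1..i}. lkp m k) = j}"

lemma chom_TS: "chom i j = (\<Sum>m\<in>TS i j. mon m)"
  unfolding chom_def TS_def by simp

lemma TS_le: "m \<in> TS i j \<Longrightarrow> lkp m k \<le> j"
proof -
  assume m: "m \<in> TS i j"
  show ?thesis
  proof (cases "k \<in> {1..i}")
    case True
    have "lkp m k \<le> (\<Sum>k\<in>{1..i}. lkp m k)" by (rule member_le_sum[OF True]) simp_all
    then show ?thesis using m unfolding TS_def by simp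
  next
    case False
    then have "k \<notin> Poly_Mapping.keys m" using m unfolding TS_def by auto
    then show ?thesis by (simp add: in_keys_iff)
  qed
qed

lemma finite_TS[simp]: "finite (TS i j)"
proof -
  let ?f = "\<lambda>m. restrict (lkp m) {1..i}"
  have inj: "inj_on ?f (TS i j)"
  proof (rule inj_onI)
    fix a b assume a: "a \<in> TS i j" and b: "b \<in> TS i j" and e: "?f a = ?f b"
    show "a = b"
    proof (rule poly_mapping_eqI)
      fix k show "lkp a k = lkp b k"
      proof (cases "k \<in> {1..i}")
        case True then show ?thesis using fun_cong[OF e, of k] by simp
      next
        case False
        then have "k \<notin> Poly_Mapping.keys a" "k \<notin> Poly_Mapping.keys b" using a b unfolding TS_def by auto
        then show ?thesis by (simp add: in_keys_iff)
      qed
    qed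
  qed
  have "?f ` TS i j \<subseteq> PiE {1..i} (\<lambda>_. {0..j})" using TS_le by auto
  then have "finite (?f ` TS i j)" by (rule finite_subset) (simp add: finite_PiE)
  then show ?thesis using inj by (rule finite_imageD)
qed

lemma keys_sub_zero: "Poly_Mapping.keys m \<subseteq> {1..i} \<Longrightarrow> k \<notin> {1..i} \<Longrightarrow> lkp m k = 0"
  by (auto simp: in_keys_iff)

lemma chom_0: "chom i 0 = 1"
proof -
  have "TS i 0 = {0}"
  proof (rule set_eqI, rule iffI)
    fix m assume "m \<in> TS i 0"
    then have "lkp m k = 0" for k using TS_le[of m i 0 k] by simp
    then show "m \<in> {0}" by (simp add: poly_mapping_eqI)
  qed (simp add: TS_def)
  then show ?thesis unfolding chom_TS by (simp add: mon_zero)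
qed

lemma chom_nonzero: "1 \<le> i \<Longrightarrow> chom i j \<noteq> 0"
proof -
  assume i: "1 \<le> i"
  have "Poly_Mapping.single 1 j \<in> TS i j"
    unfolding TS_def using i by (simp add: lookup_single when_def)
  then have "TS i j \<noteq> {}" by auto
  then have "card (TS i j) \<noteq> 0" by simp
  moreover have "ev (chom i j) = int (card (TS i j))"
    unfolding chom_TS ev_sum by (simp add: ev_mon)
  ultimately show ?thesis by (intro ev_nonzero) simp
qed

lemma chom_pres:
  assumes s: "invol \<sigma>" and A: "\<And>x. x \<in> {1..i} \<longleftrightarrow> \<sigma> x \<in> {1..i}"
  shows "pv \<sigma> (chom i j) = chom i j"
proof -
  have inj: "inj \<sigma>" using s by (rule invol_inj)
  have ss: "\<sigma> (\<sigma> x) = x" for x using s unfolding invol_def by simp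
  have img: "\<sigma> ` {1..i} = {1..i}" by (rule pres_image[OF s A])
  have mem: "pm \<sigma> m \<in> TS i j" if m: "m \<in> TS i j" for m
  proof -
    have "Poly_Mapping.keys (pm \<sigma> m) \<subseteq> {1..i}"
    proof
      fix k assume "k \<in> Poly_Mapping.keys (pm \<sigma> m)"
      then have "\<sigma> k \<in> Poly_Mapping.keys m" by (simp add: in_keys_iff lookup_pm inj)
      then have "\<sigma> k \<in> {1..i}" using m unfolding TS_def by auto
      then show "k \<in> {1..i}" using A by blast
    qed
    moreover have "(\<Sum>k\<in>{1..i}. lkp (pm \<sigma> m) k) = (\<Sum>k\<in>{1..i}. lkp m k)"
    proof -
      have "(\<Sum>k\<in>{1..i}. lkp m k) = (\<Sum>k\<in>\<sigma> ` {1..i}. lkp m k)" by (simp only: img)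
      also have "\<dots> = (\<Sum>k\<in>{1..i}. lkp m (\<sigma> k))" by (rule sum.reindex[OF inj_on_subset[OF inj], unfolded comp_def]) simp
      finally show ?thesis by (simp add: lookup_pm inj)
    qed
    ultimately show ?thesis using m unfolding TS_def by simp
  qed
  have "pv \<sigma> (chom i j) = (\<Sum>m\<in>TS i j. mon (pm \<sigma> m))"
    unfolding chom_TS using s by (simp add: pv_sum pv_mon)
  also have "\<dots> = chom i j" unfolding chom_TS
    by (rule sum.reindex_bij_witness[of _ "pm \<sigma>" "pm \<sigma>"]) (simp_all add: pm_invol s mem)
  finally show ?thesis .
qed

lemma chom_sym: assumes "1 \<le> i" "j \<noteq> i" shows "sv i (chom j k) = chom j k"
  by (rule chom_pres[OF inv_sw sw_pres[OF assms]])

lemma sum_Suc_split: "(\<Sum>k\<in>{1..Suc i}. lkp m k) = (\<Sum>k\<in>{1..i}. lkp m k) + lkp m (Suc i)"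
  by simp

lemma chom_rec: "chom (Suc i) (Suc k) = chom i (Suc k) + var (Suc i) * chom (Suc i) k"
proof -
  define e where "e = Poly_Mapping.single (Suc i) (1::nat)"
  have le: "lkp e l = (if l = Suc i then 1 else 0)" for l unfolding e_def by (simp add: lookup_single when_def)
  have eq: "TS (Suc i) (Suc k) = TS i (Suc k) \<union> (\<lambda>m. m + e) ` TS (Suc i) k"
  proof (rule set_eqI, rule iffI)
    fix m assume m: "m \<in> TS (Suc i) (Suc k)"
    then have km: "Poly_Mapping.keys m \<subseteq> {1..Suc i}" and sm: "(\<Sum>k\<in>{1..Suc i}. lkp m k) = Suc k"
      unfolding TS_def by auto
    show "m \<in> TS i (Suc k) \<union> (\<lambda>m. m + e) ` TS (Suc i) k"
    proof (cases "lkp m (Suc i) = 0")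
      case True
      have "Poly_Mapping.keys m \<subseteq> {1..i}"
      proof
        fix x assume x: "x \<in> Poly_Mapping.keys m"
        then have "x \<noteq> Suc i" using True by (auto simp: in_keys_iff)
        then show "x \<in> {1..i}" using x km by auto
      qed
      moreover have "(\<Sum>k\<in>{1..i}. lkp m k) = Suc k" using sm True by simp
      ultimately show ?thesis unfolding TS_def by simp
    next
      case False
      define m' where "m' = m - e"
      have lm': "lkp m' l = lkp m l - lkp e l" for l unfolding m'_def by (simp add: lookup_minus)
      have me: "m = m' + e" using False by (intro poly_mapping_eqI) (simp add: lookup_add lm' le)
      have "Poly_Mapping.keys m' \<subseteq> {1..Suc i}" using km by (auto simp: in_keys_iff lm' le split: if_splits)
      moreover have "(\<Sum>k\<in>{1..Suc i}. lkp m' k) = k"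
      proof -
        have "(\<Sum>k\<in>{1..i}. lkp m' k) = (\<Sum>k\<in>{1..i}. lkp m k)" by (rule sum.cong) (auto simp: lm' le)
        then show ?thesis using sm False by (simp add: lm' le)
      qed
      ultimately have "m' \<in> TS (Suc i) k" unfolding TS_def by simp
      then show ?thesis using me by blast
    qed
  next
    fix m assume "m \<in> TS i (Suc k) \<union> (\<lambda>m. m + e) ` TS (Suc i) k"
    then show "m \<in> TS (Suc i) (Suc k)"
    proof
      assume m: "m \<in> TS i (Suc k)"
      then have "lkp m (Suc i) = 0" unfolding TS_def by (intro keys_sub_zero) auto
      then show ?thesis using m unfolding TS_def by auto
    next
      assume "m \<in> (\<lambda>m. m + e) ` TS (Suc i) k"
      then obtain m' where m': "m' \<in> TS (Suc i) k" and me: "m = m' + e" by auto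
      have "Poly_Mapping.keys m \<subseteq> {1..Suc i}"
      proof
        fix l assume "l \<in> Poly_Mapping.keys m"
        then have "l \<in> Poly_Mapping.keys m' \<or> l = Suc i" unfolding me by (auto simp: in_keys_iff lookup_add le split: if_splits)
        then show "l \<in> {1..Suc i}" using m' unfolding TS_def by auto
      qed
      moreover have "(\<Sum>k\<in>{1..Suc i}. lkp m k) = Suc k"
      proof -
        have "(\<Sum>k\<in>{1..Suc i}. lkp m k) = (\<Sum>k\<in>{1..Suc i}. lkp m' k) + (\<Sum>k\<in>{1..Suc i}. lkp e k)"
          unfolding me lookup_add by (rule sum.distrib)
        also have "(\<Sum>k\<in>{1..Suc i}. lkp e k) = 1" by (simp add: le)
        finally show ?thesis using m' unfolding TS_def by simp
      qed
      ultimately show ?thesis unfolding TS_def by simp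
    qed
  qed
  have disj: "TS i (Suc k) \<inter> (\<lambda>m. m + e) ` TS (Suc i) k = {}"
  proof -
    have "lkp m (Suc i) = 0" if "m \<in> TS i (Suc k)" for m using that unfolding TS_def by (intro keys_sub_zero) auto
    moreover have "lkp (m + e) (Suc i) \<noteq> 0" for m by (simp add: lookup_add le)
    ultimately show ?thesis by (metis (no_types, lifting) disjoint_iff imageE)
  qed
  have inj: "inj_on (\<lambda>m. m + e) (TS (Suc i) k)" by (rule inj_onI) simp
  have "(\<Sum>m\<in>(\<lambda>m. m + e) ` TS (Suc i) k. mon m) = (\<Sum>m\<in>TS (Suc i) k. mon (m + e))"
    by (rule sum.reindex[OF inj, unfolded comp_def])
  also have "\<dots> = var (Suc i) * chom (Suc i) k"
    unfolding chom_TS sum_distrib_left by (simp add: mon_add e_def var_def mult.commute)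
  finally have 2: "(\<Sum>m\<in>(\<lambda>m. m + e) ` TS (Suc i) k. mon m) = var (Suc i) * chom (Suc i) k" .
  show ?thesis unfolding chom_TS[of "Suc i" "Suc k"] eq
    by (subst sum.union_disjoint) (simp_all add: disj 2 chom_TS)
qed

lemma dd_var_Si: "divdiff i (var (Suc i)) = -1"
  by (rule divdiff_unique) (simp add: dlt_def)

lemma dd_chom: assumes i: "1 \<le> i" shows "divdiff i (chom i (Suc k)) = chom (Suc i) k"
proof -
  have s1: "sv i (chom (Suc i) j) = chom (Suc i) j" for j by (rule chom_sym[OF i]) simp
  have "chom i (Suc k) = chom (Suc i) (Suc k) - chom (Suc i) k * var (Suc i)"
    using chom_rec[of i k] by (simp add: mult.commute)
  then have "divdiff i (chom i (Suc k)) = divdiff i (chom (Suc i) (Suc k)) - divdiff i (chom (Suc i) k * var (Suc i))"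
    by (simp add: dd_diff)
  also have "\<dots> = chom (Suc i) k" by (simp add: dd_sym s1 dd_sym_mult dd_var_Si)
  finally show ?thesis .
qed

lemma prod_dd:
  assumes A: "finite A" "i \<in> A" and s: "\<And>j. j \<in> A - {i} \<Longrightarrow> sv i (f j) = f j"
  shows "divdiff i (\<Prod>j\<in>A. f j) = divdiff i (f i) * (\<Prod>j\<in>A-{i}. f j)"
proof -
  have P: "sv i (\<Prod>j\<in>A-{i}. f j) = (\<Prod>j\<in>A-{i}. f j)" by (simp add: pv_prod s)
  have "(\<Prod>j\<in>A. f j) = (\<Prod>j\<in>A-{i}. f j) * f i" using A by (simp add: prod.remove mult.commute)
  then have "divdiff i (\<Prod>j\<in>A. f j) = divdiff i ((\<Prod>j\<in>A-{i}. f j) * f i)" by simp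
  also have "\<dots> = (\<Prod>j\<in>A-{i}. f j) * divdiff i (f i)" by (rule dd_sym_mult[OF P])
  finally show ?thesis by (simp add: mult.commute)
qed

lemma prod_nonzero: "finite A \<Longrightarrow> (\<And>j. j \<in> A \<Longrightarrow> (f j :: mpoly) \<noteq> 0) \<Longrightarrow> (\<Prod>j\<in>A. f j) \<noteq> 0"
  by (simp add: prod_zero_iff)

lemma elem_dd:
  assumes i: "1 \<le> i" "i < n"
  shows "divdiff i (elem_monomial n a) = divdiff i (elem i (a i)) * (\<Prod>j\<in>{1..n}-{i}. elem j (a j))"
  unfolding elem_monomial_def using i by (intro prod_dd) (auto intro: elem_sym)

lemma chom_dd:
  assumes i: "1 \<le> i" "i \<le> n"
  shows "divdiff i (chom_monomial n a) = divdiff i (chom i (a i)) * (\<Prod>j\<in>{1..n}-{i}. chom j (a j))"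
  unfolding chom_monomial_def using i by (intro prod_dd) (auto intro: chom_sym)

lemma prod_upd:
  assumes "finite A" "i \<in> A"
  shows "(\<Prod>j\<in>A. f j) = f i * (\<Prod>j\<in>A-{i}. f j)"
  using assms by (simp add: prod.remove)

lemma elem_part:
  assumes p: "w permutes {1..n}" and a: "\<forall>k\<in>{1..n}. a k \<le> k" and S: "schub n w = elem_monomial n a"
  shows "(\<forall>i. 1 \<le> i \<and> i \<le> n - 1 \<longrightarrow> (a i = 0 \<longleftrightarrow> ascent w i)) \<and>
       (\<forall>i. 1 \<le> i \<and> i \<le> n - 1 \<and> descent w i \<and> ascent w (i - 1) \<longrightarrow>
          divdiff i (schub n w) = schub n (w \<circ> sw i) \<and>
          (\<exists>b. (\<forall>k\<in>{1..n}. b k \<le> k) \<and> schub n (w \<circ> sw i) = elem_monomial n b))"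
proof -
  have others: "(\<Prod>j\<in>{1..n}-{i}. elem j (a j)) \<noteq> 0" for i
  proof (rule prod_nonzero)
    fix j assume "j \<in> {1..n}-{i}" then have "a j \<le> j" using a by auto
    then show "elem j (a j) \<noteq> 0" by (rule elem_nonzero)
  qed simp
  have P1: "a i = 0 \<longleftrightarrow> ascent w i" if i: "1 \<le> i" "i \<le> n - 1" for i
  proof -
    have i': "1 \<le> i" "i < n" using i by auto
    show ?thesis
    proof
      assume a0: "a i = 0"
      then have "divdiff i (schub n w) = 0" unfolding S elem_dd[OF i'] by (simp add: elem_0)
      show "ascent w i" unfolding ascent_def
      proof (rule ccontr)
        assume "\<not> w i < w (i + 1)"
        then have d: "w (Suc i) < w i" using perm_neq[OF p, of i] by simp
        have "schub n (w \<circ> sw i) \<noteq> 0" by (rule schub_nonzero[OF perm_sw[OF p i']])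
        with schub_desc[OF p i' d] \<open>divdiff i (schub n w) = 0\<close> show False by simp
      qed
    next
      assume asc: "ascent w i"
      show "a i = 0"
      proof (rule ccontr)
        assume "a i \<noteq> 0"
        then obtain c where c: "a i = Suc c" by (cases "a i") auto
        obtain i0 where i0: "i = Suc i0" using i by (cases i) auto
        have "a i \<le> i" using a i' by auto
        then have "c \<le> i0" using c i0 by simp
        then have "divdiff i (schub n w) \<noteq> 0" unfolding S elem_dd[OF i'] c using others[of i]
          unfolding i0 by (simp add: dd_elem elem_nonzero)
        moreover have "divdiff i (schub n w) = 0" using schub_asc_zero[OF p] asc i' by (simp add: ascent_def)
        ultimately show False by simp
      qed
    qed
  qed
  have P2: "divdiff i (schub n w) = schub n (w \<circ> sw i) \<and>
          (\<exists>b. (\<forall>k\<in>{1..n}. b k \<le> k) \<and> schub n (w \<circ> sw i) = elem_monomial n b)"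
    if i: "1 \<le> i" "i \<le> n - 1" and d: "descent w i" and asc: "ascent w (i - 1)" for i
  proof -
    have i': "1 \<le> i" "i < n" using i by auto
    have d': "w (Suc i) < w i" using d by (simp add: descent_def)
    have E: "divdiff i (schub n w) = schub n (w \<circ> sw i)" by (rule schub_desc[OF p i' d'])
    have "a i \<noteq> 0" using P1[OF i] d by (simp add: ascent_def descent_def)
    then obtain c where c: "a i = Suc c" by (cases "a i") auto
    obtain i0 where i0: "i = Suc i0" using i by (cases i) auto
    have "a i \<le> i" using a i' by auto
    then have ci: "c \<le> i0" using c i0 by simp
    have D: "schub n (w \<circ> sw i) = elem i0 c * (\<Prod>j\<in>{1..n}-{i}. elem j (a j))"
      using E unfolding S elem_dd[OF i'] c unfolding i0 by (simp add: dd_elem)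
    show ?thesis
    proof (cases "i0 = 0")
      case True
      then have c0: "c = 0" using ci by simp
      define b where "b = a(i := 0)"
      have bk: "\<forall>k\<in>{1..n}. b k \<le> k" using a unfolding b_def by simp
      have "elem_monomial n b = elem i 0 * (\<Prod>j\<in>{1..n}-{i}. elem j (b j))"
        unfolding elem_monomial_def using i' by (subst prod_upd[of _ i]) (simp_all add: b_def)
      also have "(\<Prod>j\<in>{1..n}-{i}. elem j (b j)) = (\<Prod>j\<in>{1..n}-{i}. elem j (a j))"
        by (rule prod.cong) (simp_all add: b_def)
      finally have X: "elem_monomial n b = elem i 0 * (\<Prod>j\<in>{1..n}-{i}. elem j (a j))" .
      have D': "schub n (w \<circ> sw i) = (\<Prod>j\<in>{1..n}-{i}. elem j (a j))"
        using D unfolding True c0 by (simp add: elem_0)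
      have "elem_monomial n b = schub n (w \<circ> sw i)" unfolding X D' by (simp add: elem_0)
      then show ?thesis using E bk by metis
    next
      case False
      have i0': "1 \<le> i0" "i0 \<le> n - 1" using False i i0 by auto
      have ai0: "a i0 = 0" using P1[OF i0'] asc i0 by simp
      define b where "b = a(i := 0, i0 := c)"
      have bk: "\<forall>k\<in>{1..n}. b k \<le> k" using a ci unfolding b_def by simp
      have fin: "finite ({1..n} - {i})" by simp
      have mem: "i0 \<in> {1..n} - {i}" using i0' i0 by auto
      have "b i = 0" unfolding b_def using i0 by simp
      then have "elem_monomial n b = elem i 0 * (\<Prod>j\<in>{1..n}-{i}. elem j (b j))"
        unfolding elem_monomial_def using i' by (subst prod_upd[of _ i]) simp_all
      also have "(\<Prod>j\<in>{1..n}-{i}. elem j (b j)) = elem i0 c * (\<Prod>j\<in>{1..n}-{i}-{i0}. elem j (b j))"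
        by (subst prod_upd[OF fin mem]) (simp add: b_def i0)
      also have "(\<Prod>j\<in>{1..n}-{i}-{i0}. elem j (b j)) = (\<Prod>j\<in>{1..n}-{i}-{i0}. elem j (a j))"
        by (rule prod.cong) (simp_all add: b_def)
      also have "\<dots> = (\<Prod>j\<in>{1..n}-{i}. elem j (a j))"
        using prod_upd[OF fin mem, of "\<lambda>j. elem j (a j)"] by (simp add: ai0 elem_0)
      finally have "elem_monomial n b = schub n (w \<circ> sw i)"
        using D by (simp add: elem_0)
      then show ?thesis using E bk by metis
    qed
  qed
  show ?thesis using P1 P2 by blast
qed

lemma chom_a_n:
  assumes n: "1 \<le> n" and S: "schub n w = chom_monomial n a"
  shows "a n = 0"
proof (rule ccontr)
  assume "a n \<noteq> 0"
  then obtain c where c: "a n = Suc c" by (cases "a n") auto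
  have R0: "(\<Prod>j\<in>{1..n}-{n}. chom j (a j)) \<noteq> 0"
  proof (rule prod_nonzero)
    fix j assume "j \<in> {1..n}-{n}" then have "1 \<le> j" by auto
    then show "chom j (a j) \<noteq> 0" by (rule chom_nonzero)
  qed simp
  have "divdiff n (schub n w) = 0" by (rule dd_sym[OF schub_sym_n])
  moreover have "divdiff n (schub n w) = chom (Suc n) c * (\<Prod>j\<in>{1..n}-{n}. chom j (a j))"
    unfolding S chom_dd[OF n order_refl] c using n by (simp add: dd_chom)
  moreover have "chom (Suc n) c \<noteq> 0" by (rule chom_nonzero) simp
  ultimately show False using R0 by simp
qed

lemma chom_part:
  assumes p: "w permutes {1..n}" and S: "schub n w = chom_monomial n a"
  shows "(\<forall>i. 1 \<le> i \<and> i \<le> n - 1 \<longrightarrow> (a i = 0 \<longleftrightarrow> ascent w i)) \<and>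
       (\<forall>i. 1 \<le> i \<and> i \<le> n - 1 \<and> descent w i \<and> ascent w (i + 1) \<longrightarrow>
          divdiff i (schub n w) = schub n (w \<circ> sw i) \<and>
          (\<exists>b. schub n (w \<circ> sw i) = chom_monomial n b))"
proof -
  have others: "(\<Prod>j\<in>{1..n}-{i}. chom j (a j)) \<noteq> 0" for i
  proof (rule prod_nonzero)
    fix j assume "j \<in> {1..n}-{i}" then have "1 \<le> j" by auto
    then show "chom j (a j) \<noteq> 0" by (rule chom_nonzero)
  qed simp
  have P1: "a i = 0 \<longleftrightarrow> ascent w i" if i: "1 \<le> i" "i \<le> n - 1" for i
  proof -
    have i': "1 \<le> i" "i < n" using i by auto
    have i'': "1 \<le> i" "i \<le> n" using i by auto
    show ?thesis
    proof
      assume a0: "a i = 0"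
      then have "divdiff i (schub n w) = 0" unfolding S chom_dd[OF i''] by (simp add: chom_0)
      show "ascent w i" unfolding ascent_def
      proof (rule ccontr)
        assume "\<not> w i < w (i + 1)"
        then have d: "w (Suc i) < w i" using perm_neq[OF p, of i] by simp
        have "schub n (w \<circ> sw i) \<noteq> 0" by (rule schub_nonzero[OF perm_sw[OF p i']])
        with schub_desc[OF p i' d] \<open>divdiff i (schub n w) = 0\<close> show False by simp
      qed
    next
      assume asc: "ascent w i"
      show "a i = 0"
      proof (rule ccontr)
        assume "a i \<noteq> 0"
        then obtain c where c: "a i = Suc c" by (cases "a i") auto
        have "divdiff i (schub n w) \<noteq> 0" unfolding S chom_dd[OF i''] using others[of i] i
          by (simp add: c dd_chom chom_nonzero)
        moreover have "divdiff i (schub n w) = 0" using schub_asc_zero[OF p] asc i' by (simp add: ascent_def)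
        ultimately show False by simp
      qed
    qed
  qed
  have P2: "divdiff i (schub n w) = schub n (w \<circ> sw i) \<and>
          (\<exists>b. schub n (w \<circ> sw i) = chom_monomial n b)"
    if i: "1 \<le> i" "i \<le> n - 1" and d: "descent w i" and asc: "ascent w (i + 1)" for i
  proof -
    have i': "1 \<le> i" "i < n" using i by auto
    have i'': "1 \<le> i" "i \<le> n" using i by auto
    have d': "w (Suc i) < w i" using d by (simp add: descent_def)
    have E: "divdiff i (schub n w) = schub n (w \<circ> sw i)" by (rule schub_desc[OF p i' d'])
    have "a i \<noteq> 0" using P1[OF i] d by (simp add: ascent_def descent_def)
    then obtain c where c: "a i = Suc c" by (cases "a i") auto
    have D: "schub n (w \<circ> sw i) = chom (Suc i) c * (\<Prod>j\<in>{1..n}-{i}. chom j (a j))"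
      using E unfolding S chom_dd[OF i''] using i by (simp add: c dd_chom)
    have aSi: "a (Suc i) = 0"
    proof (cases "Suc i = n")
      case True then show ?thesis using chom_a_n[OF _ S] i by simp
    next
      case False
      then have "1 \<le> Suc i" "Suc i \<le> n - 1" using i by auto
      then show ?thesis using P1 asc by simp
    qed
    define b where "b = a(i := 0, Suc i := c)"
    have fin: "finite ({1..n} - {i})" by simp
    have mem: "Suc i \<in> {1..n} - {i}" using i by auto
    have "chom_monomial n b = chom i 0 * (\<Prod>j\<in>{1..n}-{i}. chom j (b j))"
      unfolding chom_monomial_def using i' by (subst prod_upd[of _ i]) (simp_all add: b_def)
    also have "(\<Prod>j\<in>{1..n}-{i}. chom j (b j)) = chom (Suc i) c * (\<Prod>j\<in>{1..n}-{i}-{Suc i}. chom j (b j))"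
      by (subst prod_upd[OF fin mem]) (simp add: b_def)
    also have "(\<Prod>j\<in>{1..n}-{i}-{Suc i}. chom j (b j)) = (\<Prod>j\<in>{1..n}-{i}-{Suc i}. chom j (a j))"
      by (rule prod.cong) (simp_all add: b_def)
    also have "\<dots> = (\<Prod>j\<in>{1..n}-{i}. chom j (a j))"
      using prod_upd[OF fin mem, of "\<lambda>j. chom j (a j)"] by (simp add: aSi chom_0)
    finally have "chom_monomial n b = schub n (w \<circ> sw i)"
      using D by (simp add: chom_0)
    then show ?thesis using E by metis
  qed
  show ?thesis using P1 P2 by blast
qed

theorem lemma6:
  fixes n :: nat and w :: "nat \<Rightarrow> nat"
  assumes w: "w permutes {1..n}"
  shows
   "(\<forall>a. (\<forall>k\<in>{1..n}. a k \<le> k) \<and> schubert n w = elem_monomial n a \<longrightarrow>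
       (\<forall>i. 1 \<le> i \<and> i \<le> n - 1 \<longrightarrow> (a i = 0 \<longleftrightarrow> ascent w i)) \<and>
       (\<forall>i. 1 \<le> i \<and> i \<le> n - 1 \<and> descent w i \<and> ascent w (i - 1) \<longrightarrow>
          divdiff i (schubert n w) = schubert n (w \<circ> transpose i (i+1)) \<and>
          (\<exists>b. (\<forall>k\<in>{1..n}. b k \<le> k) \<and>
               schubert n (w \<circ> transpose i (i+1)) = elem_monomial n b)))
    \<and>
    (\<forall>a. schubert n w = chom_monomial n a \<longrightarrow>
       (\<forall>i. 1 \<le> i \<and> i \<le> n - 1 \<longrightarrow> (a i = 0 \<longleftrightarrow> ascent w i)) \<and>
       (\<forall>i. 1 \<le> i \<and> i \<le> n - 1 \<and> descent w i \<and> ascent w (i + 1) \<longrightarrow>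
          divdiff i (schubert n w) = schubert n (w \<circ> transpose i (i+1)) \<and>
          (\<exists>b. schubert n (w \<circ> transpose i (i+1)) = chom_monomial n b)))"
  unfolding schubert_eq sw_def[symmetric]
  using elem_part[OF w] chom_part[OF w] by blast

end
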